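(* Let $p$ be a prime, let $(\mathcal G,\Gamma)$ be a finite proper graph of pro-$p$ groups, $G=\Pi_1(\mathcal G,\Gamma)$, and let $U$ be a (closed) normal subgroup of $G$. Put $\tilde U=\langle \mathcal G(v)^g\cap U\mid g\in G,\ v\in V(\Gamma)\rangle$ (closed subgroup generated). Then $\tilde U$ is normal in $G$ and $G/\tilde U\cong\Pi_1(\mathcal G_U,\Gamma)$, where $(\mathcal G_U,\Gamma)$ is the graph of pro-$p$ groups with $\mathcal G_U(m)=\mathcal G(m)U/U$ for each vertex or edge $m$ of $\Gamma$, and boundary maps $\partial_0,\partial_1$ the natural inclusions in $G/U$.
   Context: A finite graph of pro-$p$ groups $(\mathcal G,\Gamma)$ over a finite graph $\Gamma$ (maps $d_0,d_1$ giving edge endpoints) assigns pro-$p$ groups $\mathcal G(v)$, $\mathcal G(e)$ and monomorphisms $\partial_i:\mathcal G(e)\to\mathcal G(d_i(e))$. Its fundamental pro-$p$ group, with respect to a maximal subtree $D$, is given by the pro-$p$ presentation $\langle\mathcal G(v),t_e\mid t_e=1\ (e\in D),\ \partial_0(g)=t_e\partial_1(g)t_e^{-1}\ (g\in\mathcal G(e))\rangle$. Proper means each $\mathcal G(v)\to\Pi_1$ is injective, and vertex/edge groups are identified with their images in $G$. $h^g=g^{-1}hg$. *)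

theory Defs
  imports "HOL-Analysis.Analysis" "HOL-Algebra.Algebra"
begin

definition topological_group :: "('g, 'm) monoid_scheme \<Rightarrow> 'g topology \<Rightarrow> bool" where
  "topological_group G T \<longleftrightarrow> group G \<and> topspace T = carrier G \<and>
     continuous_map (prod_topology T T) T (\<lambda>(x, y). x \<otimes>\<^bsub>G\<^esub> y) \<and>
     continuous_map T T (\<lambda>x. inv\<^bsub>G\<^esub> x)"

text \<open>Pro-p group: compact Hausdorff topological group in which the open normal subgroups
  form a base of neighbourhoods of the identity and every open normal subgroup has
  p-power index (Ribes-Zalesskii, Thm. 2.1.3 / Sect. 2.3).\<close>
definition pro_p_group :: "nat \<Rightarrow> ('g, 'm) monoid_scheme \<Rightarrow> 'g topology \<Rightarrow> bool" where
  "pro_p_group p G T \<longleftrightarrow> topological_group G T \<and> compact_space T \<and> Hausdorff_space T \<and>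
     (\<forall>W. openin T W \<and> \<one>\<^bsub>G\<^esub> \<in> W \<longrightarrow> (\<exists>N. N \<lhd> G \<and> openin T N \<and> N \<subseteq> W)) \<and>
     (\<forall>N. N \<lhd> G \<and> openin T N \<longrightarrow> (\<exists>k::nat. card (rcosets\<^bsub>G\<^esub> N) = p ^ k))"

definition cont_hom ::
  "('a, 'm) monoid_scheme \<Rightarrow> 'a topology \<Rightarrow> ('b, 'n) monoid_scheme \<Rightarrow> 'b topology \<Rightarrow> ('a \<Rightarrow> 'b) set" where
  "cont_hom G S H T = {f. f \<in> hom G H \<and> continuous_map S T f}"

definition quot_top :: "('g, 'm) monoid_scheme \<Rightarrow> 'g topology \<Rightarrow> 'g set \<Rightarrow> 'g set topology" where
  "quot_top G T N = topology (\<lambda>S. S \<subseteq> rcosets\<^bsub>G\<^esub> N \<and> openin T (\<Union>S))"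

definition closed_generate :: "('g, 'm) monoid_scheme \<Rightarrow> 'g topology \<Rightarrow> 'g set \<Rightarrow> 'g set" where
  "closed_generate G T S = T closure_of (generate G S)"

definition graph :: "'v set \<Rightarrow> 'e set \<Rightarrow> ('e \<Rightarrow> 'v) \<Rightarrow> ('e \<Rightarrow> 'v) \<Rightarrow> bool" where
  "graph V E d0 d1 \<longleftrightarrow> finite V \<and> finite E \<and> (\<forall>e\<in>E. d0 e \<in> V \<and> d1 e \<in> V)"

definition adj_rel :: "'e set \<Rightarrow> ('e \<Rightarrow> 'v) \<Rightarrow> ('e \<Rightarrow> 'v) \<Rightarrow> ('v \<times> 'v) set" where
  "adj_rel D d0 d1 = {(d0 e, d1 e) |e. e \<in> D} \<union> {(d1 e, d0 e) |e. e \<in> D}"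

text \<open>\<open>D\<close> is a maximal subtree of the (finite, connected) graph: a set of edges forming a
  connected subgraph on all of \<open>V\<close> with \<open>|D| = |V| - 1\<close>, i.e. a spanning tree.\<close>
definition maximal_subtree :: "'v set \<Rightarrow> 'e set \<Rightarrow> ('e \<Rightarrow> 'v) \<Rightarrow> ('e \<Rightarrow> 'v) \<Rightarrow> 'e set \<Rightarrow> bool" where
  "maximal_subtree V E d0 d1 D \<longleftrightarrow> D \<subseteq> E \<and> V \<noteq> {} \<and> card D + 1 = card V \<and>
     (\<forall>u\<in>V. \<forall>w\<in>V. (u, w) \<in> (adj_rel D d0 d1)\<^sup>*)"

definition graph_of_pro_p_groups ::
  "nat \<Rightarrow> 'v set \<Rightarrow> 'e set \<Rightarrow> ('e \<Rightarrow> 'v) \<Rightarrow> ('e \<Rightarrow> 'v) \<Rightarrow>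
   ('v \<Rightarrow> ('a, 'm) monoid_scheme) \<Rightarrow> ('v \<Rightarrow> 'a topology) \<Rightarrow>
   ('e \<Rightarrow> ('b, 'n) monoid_scheme) \<Rightarrow> ('e \<Rightarrow> 'b topology) \<Rightarrow>
   ('e \<Rightarrow> 'b \<Rightarrow> 'a) \<Rightarrow> ('e \<Rightarrow> 'b \<Rightarrow> 'a) \<Rightarrow> bool" where
  "graph_of_pro_p_groups p V E d0 d1 GV TV GE TE del0 del1 \<longleftrightarrow>
     graph V E d0 d1 \<and>
     (\<forall>v\<in>V. pro_p_group p (GV v) (TV v)) \<and>
     (\<forall>e\<in>E. pro_p_group p (GE e) (TE e)) \<and>
     (\<forall>e\<in>E. del0 e \<in> cont_hom (GE e) (TE e) (GV (d0 e)) (TV (d0 e)) \<and>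
             inj_on (del0 e) (carrier (GE e))) \<and>
     (\<forall>e\<in>E. del1 e \<in> cont_hom (GE e) (TE e) (GV (d1 e)) (TV (d1 e)) \<and>
             inj_on (del1 e) (carrier (GE e)))"

text \<open>The relations of the pro-p presentation of the fundamental group, for images
  \<open>f v\<close> of the vertex groups and \<open>s e\<close> of the stable letters \<open>t_e\<close> in a group \<open>H\<close>.\<close>
definition pi1_relations ::
  "'v set \<Rightarrow> 'e set \<Rightarrow> ('e \<Rightarrow> 'v) \<Rightarrow> ('e \<Rightarrow> 'v) \<Rightarrow> 'e set \<Rightarrow>
   ('e \<Rightarrow> ('b, 'n) monoid_scheme) \<Rightarrow> ('e \<Rightarrow> 'b \<Rightarrow> 'a) \<Rightarrow> ('e \<Rightarrow> 'b \<Rightarrow> 'a) \<Rightarrow>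
   ('h, 'k) monoid_scheme \<Rightarrow> ('v \<Rightarrow> 'a \<Rightarrow> 'h) \<Rightarrow> ('e \<Rightarrow> 'h) \<Rightarrow> bool" where
  "pi1_relations V E d0 d1 D GE del0 del1 H f s \<longleftrightarrow>
     (\<forall>e\<in>E. s e \<in> carrier H) \<and>
     (\<forall>e\<in>D. s e = \<one>\<^bsub>H\<^esub>) \<and>
     (\<forall>e\<in>E. \<forall>x\<in>carrier (GE e).
        f (d0 e) (del0 e x) = s e \<otimes>\<^bsub>H\<^esub> f (d1 e) (del1 e x) \<otimes>\<^bsub>H\<^esub> inv\<^bsub>H\<^esub> (s e))"

text \<open>\<open>(G, T)\<close> together with \<open>iv\<close> (images of vertex groups) and \<open>t\<close> (stable letters) is the
  fundamental pro-p group \<open>\<Pi>_1\<close> with respect to the maximal subtree \<open>D\<close>, i.e. the pro-p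
  group given by the pro-p presentation
  \<open>\<langle>G(v), t_e | t_e = 1 (e \<in> D), \<partial>_0(g) = t_e \<partial>_1(g) t_e\<inverse>\<rangle>\<close>.
  This is expressed by its defining universal property: \<open>G\<close> is a pro-p group, topologically
  generated by the images of the generators, these satisfy the relations, and every
  assignment of the generators into a finite p-group (discrete topology) continuous on
  the vertex groups and satisfying the relations extends to a continuous homomorphism.
  (Finite p-groups are taken with carrier in \<open>nat\<close>; every finite group has such a copy.)\<close>
definition is_pi1 ::
  "nat \<Rightarrow> 'v set \<Rightarrow> 'e set \<Rightarrow> ('e \<Rightarrow> 'v) \<Rightarrow> ('e \<Rightarrow> 'v) \<Rightarrow> 'e set \<Rightarrow>
   ('v \<Rightarrow> ('a, 'm) monoid_scheme) \<Rightarrow> ('v \<Rightarrow> 'a topology) \<Rightarrow>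
   ('e \<Rightarrow> ('b, 'n) monoid_scheme) \<Rightarrow> ('e \<Rightarrow> 'b topology) \<Rightarrow>
   ('e \<Rightarrow> 'b \<Rightarrow> 'a) \<Rightarrow> ('e \<Rightarrow> 'b \<Rightarrow> 'a) \<Rightarrow>
   ('g, 'k) monoid_scheme \<Rightarrow> 'g topology \<Rightarrow> ('v \<Rightarrow> 'a \<Rightarrow> 'g) \<Rightarrow> ('e \<Rightarrow> 'g) \<Rightarrow> bool" where
  "is_pi1 p V E d0 d1 D GV TV GE TE del0 del1 G T iv t \<longleftrightarrow>
     pro_p_group p G T \<and>
     (\<forall>v\<in>V. iv v \<in> cont_hom (GV v) (TV v) G T) \<and>
     pi1_relations V E d0 d1 D GE del0 del1 G iv t \<and>
     closed_generate G T ((\<Union>v\<in>V. iv v ` carrier (GV v)) \<union> t ` E) = carrier G \<and>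
     (\<forall>(H :: nat monoid) f s.
        group H \<and> finite (carrier H) \<and> (\<exists>k::nat. card (carrier H) = p ^ k) \<and>
        (\<forall>v\<in>V. f v \<in> cont_hom (GV v) (TV v) H (discrete_topology (carrier H))) \<and>
        pi1_relations V E d0 d1 D GE del0 del1 H f s \<longrightarrow>
        (\<exists>\<phi> \<in> cont_hom G T H (discrete_topology (carrier H)).
           (\<forall>v\<in>V. \<forall>x\<in>carrier (GV v). \<phi> (iv v x) = f v x) \<and> (\<forall>e\<in>E. \<phi> (t e) = s e)))"

definition GU_vertex :: "('g, 'k) monoid_scheme \<Rightarrow> 'g set \<Rightarrow> ('v \<Rightarrow> ('a, 'm) monoid_scheme) \<Rightarrow>
    ('v \<Rightarrow> 'a \<Rightarrow> 'g) \<Rightarrow> 'v \<Rightarrow> 'g set monoid" where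
  "GU_vertex G U GV iv v =
     (G Mod U) \<lparr>carrier := (\<lambda>x. U #>\<^bsub>G\<^esub> iv v x) ` carrier (GV v)\<rparr>"

definition GU_vertex_top :: "('g, 'k) monoid_scheme \<Rightarrow> 'g topology \<Rightarrow> 'g set \<Rightarrow>
    ('v \<Rightarrow> ('a, 'm) monoid_scheme) \<Rightarrow> ('v \<Rightarrow> 'a \<Rightarrow> 'g) \<Rightarrow> 'v \<Rightarrow> 'g set topology" where
  "GU_vertex_top G T U GV iv v =
     subtopology (quot_top G T U) ((\<lambda>x. U #>\<^bsub>G\<^esub> iv v x) ` carrier (GV v))"

text \<open>Edge groups: \<open>\<G>(e)U/U \<cong> \<G>(e)/(\<G>(e) \<inter> U)\<close>, where \<open>\<G>(e) \<inter> U\<close> is the kernel of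
  \<open>\<G>(e) \<rightarrow> G/U\<close> (the same via \<open>\<partial>_0\<close> or \<open>\<partial>_1\<close>, as \<open>U\<close> is normal), with the quotient
  topology.\<close>
definition edge_kernel :: "('g, 'k) monoid_scheme \<Rightarrow> 'g set \<Rightarrow> ('e \<Rightarrow> 'v) \<Rightarrow>
    ('e \<Rightarrow> ('b, 'n) monoid_scheme) \<Rightarrow> ('e \<Rightarrow> 'b \<Rightarrow> 'a) \<Rightarrow> ('v \<Rightarrow> 'a \<Rightarrow> 'g) \<Rightarrow> 'e \<Rightarrow> 'b set" where
  "edge_kernel G U d1 GE del1 iv e = {x \<in> carrier (GE e). iv (d1 e) (del1 e x) \<in> U}"

definition GU_edge :: "('g, 'k) monoid_scheme \<Rightarrow> 'g set \<Rightarrow> ('e \<Rightarrow> 'v) \<Rightarrow>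
    ('e \<Rightarrow> ('b, 'n) monoid_scheme) \<Rightarrow> ('e \<Rightarrow> 'b \<Rightarrow> 'a) \<Rightarrow> ('v \<Rightarrow> 'a \<Rightarrow> 'g) \<Rightarrow> 'e \<Rightarrow> 'b set monoid" where
  "GU_edge G U d1 GE del1 iv e = GE e Mod edge_kernel G U d1 GE del1 iv e"

definition GU_edge_top :: "('g, 'k) monoid_scheme \<Rightarrow> 'g set \<Rightarrow> ('e \<Rightarrow> 'v) \<Rightarrow>
    ('e \<Rightarrow> ('b, 'n) monoid_scheme) \<Rightarrow> ('e \<Rightarrow> 'b topology) \<Rightarrow> ('e \<Rightarrow> 'b \<Rightarrow> 'a) \<Rightarrow>
    ('v \<Rightarrow> 'a \<Rightarrow> 'g) \<Rightarrow> 'e \<Rightarrow> 'b set topology" where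
  "GU_edge_top G U d1 GE TE del1 iv e = quot_top (GE e) (TE e) (edge_kernel G U d1 GE del1 iv e)"

definition GU_del :: "('g, 'k) monoid_scheme \<Rightarrow> 'g set \<Rightarrow> ('e \<Rightarrow> 'v) \<Rightarrow>
    ('e \<Rightarrow> 'b \<Rightarrow> 'a) \<Rightarrow> ('v \<Rightarrow> 'a \<Rightarrow> 'g) \<Rightarrow> 'e \<Rightarrow> 'b set \<Rightarrow> 'g set" where
  "GU_del G U di deli iv e C = (\<Union>x\<in>C. U #>\<^bsub>G\<^esub> iv (di e) (deli e x))"

definition U_tilde :: "('g, 'k) monoid_scheme \<Rightarrow> 'g topology \<Rightarrow> 'v set \<Rightarrow>
    ('v \<Rightarrow> ('a, 'm) monoid_scheme) \<Rightarrow> ('v \<Rightarrow> 'a \<Rightarrow> 'g) \<Rightarrow> 'g set \<Rightarrow> 'g set" where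
  "U_tilde G T V GV iv U = closed_generate G T
     {y. \<exists>v\<in>V. \<exists>g\<in>carrier G. \<exists>x\<in>carrier (GV v).
           y = inv\<^bsub>G\<^esub> g \<otimes>\<^bsub>G\<^esub> iv v x \<otimes>\<^bsub>G\<^esub> g \<and> y \<in> U}"

end

theory Submission
  imports Defs
begin

section \<open>Cosets\<close>

lemma rcos_eq_iff:
  assumes "group G" "subgroup N G" "a \<in> carrier G" "b \<in> carrier G"
  shows "N #>\<^bsub>G\<^esub> a = N #>\<^bsub>G\<^esub> b \<longleftrightarrow> a \<otimes>\<^bsub>G\<^esub> inv\<^bsub>G\<^esub> b \<in> N"
proof
  assume "N #>\<^bsub>G\<^esub> a = N #>\<^bsub>G\<^esub> b"
  moreover have "a \<in> N #>\<^bsub>G\<^esub> a" using group.rcos_self assms by metis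
  ultimately show "a \<otimes>\<^bsub>G\<^esub> inv\<^bsub>G\<^esub> b \<in> N"
    using subgroup.rcos_module_imp assms by metis
next
  assume "a \<otimes>\<^bsub>G\<^esub> inv\<^bsub>G\<^esub> b \<in> N"
  then have "a \<in> N #>\<^bsub>G\<^esub> b" using subgroup.rcos_module_rev assms by metis
  then show "N #>\<^bsub>G\<^esub> a = N #>\<^bsub>G\<^esub> b"
    using group.repr_independence assms by metis
qed

lemma rcos_mem_eq:
  assumes "group G" "subgroup N G" "A \<in> rcosets\<^bsub>G\<^esub> N" "x \<in> A"
  shows "A = N #>\<^bsub>G\<^esub> x"
proof -
  obtain a where a: "a \<in> carrier G" "A = N #>\<^bsub>G\<^esub> a"
    using assms(3) unfolding RCOSETS_def by auto
  then show ?thesis using group.repr_independence assms by metis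
qed

lemma rcosetsI':
  assumes "group G" "subgroup N G" "a \<in> carrier G"
  shows "N #>\<^bsub>G\<^esub> a \<in> rcosets\<^bsub>G\<^esub> N"
  using assms group.rcosetsI subgroup.subset by metis

lemma rcosets_Union_eq:
  assumes "group G" "subgroup N G" "S \<subseteq> rcosets\<^bsub>G\<^esub> N"
  shows "\<Union>S = {x \<in> carrier G. N #>\<^bsub>G\<^esub> x \<in> S}"
proof
  show "\<Union>S \<subseteq> {x \<in> carrier G. N #>\<^bsub>G\<^esub> x \<in> S}"
  proof
    fix x assume "x \<in> \<Union>S"
    then obtain A where A: "A \<in> S" "x \<in> A" by auto
    then have "A \<in> rcosets\<^bsub>G\<^esub> N" using assms by auto
    then have "A = N #>\<^bsub>G\<^esub> x" "x \<in> carrier G"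
      using rcos_mem_eq[OF assms(1,2)] A group.rcosets_part_G[OF assms(1,2)] by auto
    then show "x \<in> {x \<in> carrier G. N #>\<^bsub>G\<^esub> x \<in> S}" using A by auto
  qed
  show "{x \<in> carrier G. N #>\<^bsub>G\<^esub> x \<in> S} \<subseteq> \<Union>S"
    using group.rcos_self[OF assms(1) _ assms(2)] by blast
qed

section \<open>Quotient topology\<close>

lemma istopology_quot:
  assumes "group G" "subgroup N G"
  shows "istopology (\<lambda>S. S \<subseteq> rcosets\<^bsub>G\<^esub> N \<and> openin T (\<Union>S))"
  unfolding istopology_def
proof (rule conjI; intro allI impI)
  fix S1 S2 assume h1: "S1 \<subseteq> rcosets\<^bsub>G\<^esub> N \<and> openin T (\<Union>S1)"
    and h2: "S2 \<subseteq> rcosets\<^bsub>G\<^esub> N \<and> openin T (\<Union>S2)"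
  have "\<Union>(S1 \<inter> S2) = \<Union>S1 \<inter> \<Union>S2"
    using rcosets_Union_eq[OF assms] h1 h2 group.rcos_self[OF assms(1) _ assms(2)] by auto
  then show "S1 \<inter> S2 \<subseteq> rcosets\<^bsub>G\<^esub> N \<and> openin T (\<Union>(S1 \<inter> S2))"
    using h1 h2 by auto
next
  fix K assume h: "\<forall>S\<in>K. S \<subseteq> rcosets\<^bsub>G\<^esub> N \<and> openin T (\<Union>S)"
  have "\<Union>(\<Union>K) = \<Union>(Union ` K)" by auto
  moreover have "openin T (\<Union>(Union ` K))" using h by auto
  ultimately show "\<Union>K \<subseteq> rcosets\<^bsub>G\<^esub> N \<and> openin T (\<Union>(\<Union>K))" using h by auto
qed

lemma openin_quot_top:
  assumes "group G" "subgroup N G"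
  shows "openin (quot_top G T N) S \<longleftrightarrow> S \<subseteq> rcosets\<^bsub>G\<^esub> N \<and> openin T (\<Union>S)"
  unfolding quot_top_def using topology_inverse'[OF istopology_quot[OF assms]] by simp

lemma topspace_quot_top:
  assumes "group G" "subgroup N G" "topspace T = carrier G"
  shows "topspace (quot_top G T N) = rcosets\<^bsub>G\<^esub> N"
proof -
  have "openin (quot_top G T N) (rcosets\<^bsub>G\<^esub> N)"
    using openin_quot_top[OF assms(1,2)] group.rcosets_part_G[OF assms(1,2)] assms(3)
    by (metis openin_topspace order_refl)
  then have "rcosets\<^bsub>G\<^esub> N \<subseteq> topspace (quot_top G T N)" by (rule openin_subset)
  moreover have "topspace (quot_top G T N) \<subseteq> rcosets\<^bsub>G\<^esub> N"
    using openin_quot_top[OF assms(1,2), of T "topspace (quot_top G T N)"] by simp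
  ultimately show ?thesis by blast
qed

lemma quot_map_continuous:
  assumes "group G" "subgroup N G" "topspace T = carrier G"
  shows "continuous_map T (quot_top G T N) (\<lambda>x. N #>\<^bsub>G\<^esub> x)"
  unfolding continuous_map_def
proof (intro conjI allI impI)
  show "(\<lambda>x. N #>\<^bsub>G\<^esub> x) \<in> topspace T \<rightarrow> topspace (quot_top G T N)"
    using topspace_quot_top[OF assms] rcosetsI'[OF assms(1,2)] assms(3) by auto
  fix S assume "openin (quot_top G T N) S"
  then have "S \<subseteq> rcosets\<^bsub>G\<^esub> N" "openin T (\<Union>S)" using openin_quot_top[OF assms(1,2)] by auto
  then show "openin T {x \<in> topspace T. N #>\<^bsub>G\<^esub> x \<in> S}"
    using rcosets_Union_eq[OF assms(1,2)] assms(3) by auto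
qed

section \<open>Topological groups\<close>

lemma tg_group: "topological_group G T \<Longrightarrow> group G"
  unfolding topological_group_def by auto

lemma tg_top: "topological_group G T \<Longrightarrow> topspace T = carrier G"
  unfolding topological_group_def by auto

lemma tg_mult: "topological_group G T \<Longrightarrow> continuous_map (prod_topology T T) T (\<lambda>(x, y). x \<otimes>\<^bsub>G\<^esub> y)"
  unfolding topological_group_def by auto

lemma tg_inv: "topological_group G T \<Longrightarrow> continuous_map T T (\<lambda>x. inv\<^bsub>G\<^esub> x)"
  unfolding topological_group_def by auto

lemma tg_lmult:
  assumes "topological_group G T" "a \<in> carrier G"
  shows "continuous_map T T (\<lambda>x. a \<otimes>\<^bsub>G\<^esub> x)"
proof -
  have "continuous_map T (prod_topology T T) (\<lambda>x. (a, x))"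
    using assms tg_top[OF assms(1)] by (simp add: continuous_map_pairwise o_def)
  from continuous_map_compose[OF this tg_mult[OF assms(1)]] show ?thesis by (simp add: o_def)
qed

lemma tg_rmult:
  assumes "topological_group G T" "a \<in> carrier G"
  shows "continuous_map T T (\<lambda>x. x \<otimes>\<^bsub>G\<^esub> a)"
proof -
  have "continuous_map T (prod_topology T T) (\<lambda>x. (x, a))"
    using assms tg_top[OF assms(1)] by (simp add: continuous_map_pairwise o_def)
  from continuous_map_compose[OF this tg_mult[OF assms(1)]] show ?thesis by (simp add: o_def)
qed

lemma tg_open_ltrans:
  fixes G (structure)
  assumes "topological_group G T" "a \<in> carrier G" "openin T W"
  shows "openin T ((\<lambda>x. a \<otimes>\<^bsub>G\<^esub> x) ` W)"
proof -
  interpret group G using tg_group[OF assms(1)] .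
  have W: "W \<subseteq> carrier G" using openin_subset[OF assms(3)] tg_top[OF assms(1)] by auto
  have "(\<lambda>x. a \<otimes> x) ` W = {y \<in> topspace T. inv a \<otimes> y \<in> W}"
  proof (intro equalityI subsetI)
    fix y assume "y \<in> (\<lambda>x. a \<otimes> x) ` W"
    then obtain x where "x \<in> W" "y = a \<otimes> x" by auto
    then show "y \<in> {y \<in> topspace T. inv a \<otimes> y \<in> W}"
      using W assms(2) tg_top[OF assms(1)] by (auto simp: m_assoc[symmetric])
  next
    fix y assume y: "y \<in> {y \<in> topspace T. inv a \<otimes> y \<in> W}"
    then have "y = a \<otimes> (inv a \<otimes> y)" using assms(2) tg_top[OF assms(1)]
      by (auto simp: m_assoc[symmetric])
    then show "y \<in> (\<lambda>x. a \<otimes> x) ` W" using y by auto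
  qed
  moreover have "openin T {y \<in> topspace T. inv a \<otimes> y \<in> W}"
    using openin_continuous_map_preimage[OF tg_lmult[OF assms(1)] assms(3)] assms(2) by auto
  ultimately show ?thesis by simp
qed

lemma tg_open_rtrans:
  fixes G (structure)
  assumes "topological_group G T" "a \<in> carrier G" "openin T W"
  shows "openin T ((\<lambda>x. x \<otimes>\<^bsub>G\<^esub> a) ` W)"
proof -
  interpret group G using tg_group[OF assms(1)] .
  have W: "W \<subseteq> carrier G" using openin_subset[OF assms(3)] tg_top[OF assms(1)] by auto
  have "(\<lambda>x. x \<otimes> a) ` W = {y \<in> topspace T. y \<otimes> inv a \<in> W}"
  proof (intro equalityI subsetI)
    fix y assume "y \<in> (\<lambda>x. x \<otimes> a) ` W"
    then obtain x where "x \<in> W" "y = x \<otimes> a" by auto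
    then show "y \<in> {y \<in> topspace T. y \<otimes> inv a \<in> W}"
      using W assms(2) tg_top[OF assms(1)] by (auto simp: m_assoc)
  next
    fix y assume y: "y \<in> {y \<in> topspace T. y \<otimes> inv a \<in> W}"
    then have "y = (y \<otimes> inv a) \<otimes> a" using assms(2) tg_top[OF assms(1)]
      by (auto simp: m_assoc)
    then show "y \<in> (\<lambda>x. x \<otimes> a) ` W" using y by auto
  qed
  moreover have "openin T {y \<in> topspace T. y \<otimes> inv a \<in> W}"
    using openin_continuous_map_preimage[OF tg_rmult[OF assms(1)] assms(3)] assms(2) by auto
  ultimately show ?thesis by simp
qed

lemma quot_map_open:
  assumes "topological_group G T" "subgroup N G"
  shows "open_map T (quot_top G T N) (\<lambda>x. N #>\<^bsub>G\<^esub> x)"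
  unfolding open_map_def
proof (intro allI impI)
  fix W assume W: "openin T W"
  have grp: "group G" using tg_group[OF assms(1)] .
  have Wc: "W \<subseteq> carrier G" using openin_subset[OF W] tg_top[OF assms(1)] by auto
  have "(\<lambda>x. N #>\<^bsub>G\<^esub> x) ` W \<subseteq> rcosets\<^bsub>G\<^esub> N"
    using rcosetsI'[OF grp assms(2)] Wc by auto
  moreover have "\<Union>((\<lambda>x. N #>\<^bsub>G\<^esub> x) ` W) = (\<Union>n\<in>N. (\<lambda>x. n \<otimes>\<^bsub>G\<^esub> x) ` W)"
    unfolding r_coset_def by auto
  moreover have "openin T (\<Union>n\<in>N. (\<lambda>x. n \<otimes>\<^bsub>G\<^esub> x) ` W)"
    using tg_open_ltrans[OF assms(1) _ W] subgroup.mem_carrier[OF assms(2)] by auto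
  ultimately show "openin (quot_top G T N) ((\<lambda>x. N #>\<^bsub>G\<^esub> x) ` W)"
    using openin_quot_top[OF grp assms(2)] by simp
qed

lemma quot_map_quotient:
  assumes "topological_group G T" "subgroup N G"
  shows "quotient_map T (quot_top G T N) (\<lambda>x. N #>\<^bsub>G\<^esub> x)"
proof -
  have grp: "group G" using tg_group[OF assms(1)] .
  have "(\<lambda>x. N #>\<^bsub>G\<^esub> x) ` topspace T = topspace (quot_top G T N)"
    using topspace_quot_top[OF grp assms(2) tg_top[OF assms(1)]] tg_top[OF assms(1)]
    unfolding RCOSETS_def by auto
  then show ?thesis
    using continuous_open_imp_quotient_map quot_map_continuous[OF grp assms(2) tg_top[OF assms(1)]]
      quot_map_open[OF assms] by blast
qed

lemma pro_p_tg: "pro_p_group p G T \<Longrightarrow> topological_group G T"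
  unfolding pro_p_group_def by auto

lemma conj_alg:
  fixes G (structure)
  assumes "group G" "m1 \<in> carrier G" "m2 \<in> carrier G" "a \<in> carrier G" "b \<in> carrier G"
  shows "inv (inv m2 \<otimes> ((m1 \<otimes> a) \<otimes> inv (m2 \<otimes> b)) \<otimes> inv (inv m2))
       = (b \<otimes> inv a) \<otimes> (inv m1 \<otimes> m2)"
proof -
  interpret group G by fact
  show ?thesis using assms by (simp add: m_assoc inv_mult_group)
qed

lemma quot_Hausdorff:
  fixes G (structure)
  assumes pp: "pro_p_group p G T" and N: "N \<lhd> G" and cl: "closedin T N"
  shows "Hausdorff_space (quot_top G T N)"
proof -
  have tg: "topological_group G T" using pro_p_tg[OF pp] .
  have grp: "group G" using tg_group[OF tg] .
  interpret group G by fact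
  have sub: "subgroup N G" using N normal_def by auto
  have top: "topspace T = carrier G" using tg_top[OF tg] .
  have base: "\<And>W. openin T W \<Longrightarrow> \<one> \<in> W \<Longrightarrow> \<exists>M. M \<lhd> G \<and> openin T M \<and> M \<subseteq> W"
    using pp unfolding pro_p_group_def by auto
  show ?thesis
    unfolding Hausdorff_space_def
  proof (intro allI impI)
    fix A B assume AB: "A \<in> topspace (quot_top G T N) \<and> B \<in> topspace (quot_top G T N) \<and> A \<noteq> B"
    then obtain a b where ab: "a \<in> carrier G" "b \<in> carrier G" "A = N #> a" "B = N #> b"
      using topspace_quot_top[OF grp sub top] unfolding RCOSETS_def by auto
    define c where "c = b \<otimes> inv a"
    have c: "c \<in> carrier G" using ab c_def by auto
    have cN: "c \<notin> N" using rcos_eq_iff[OF grp sub ab(2) ab(1)] AB ab c_def by auto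
    define W where "W = {x \<in> topspace T. c \<otimes> x \<in> topspace T - N}"
    have "openin T (topspace T - N)" using cl closedin_def by auto
    then have Wo: "openin T W" unfolding W_def
      using openin_continuous_map_preimage[OF tg_lmult[OF tg c]] by blast
    have "\<one> \<in> W" unfolding W_def using c cN top by auto
    then obtain M where M: "M \<lhd> G" "openin T M" "M \<subseteq> W" using base Wo by blast
    have sM: "subgroup M G" using M(1) normal_def by blast
    have Msub: "M \<subseteq> carrier G" using subgroup.subset[OF sM] .
    have "\<one> \<in> M" using subgroup.one_closed[OF sM] .
    define OA where "OA = (\<lambda>x. N #> x) ` ((\<lambda>x. x \<otimes> a) ` M)"
    define OB where "OB = (\<lambda>x. N #> x) ` ((\<lambda>x. x \<otimes> b) ` M)"
    have o1: "openin (quot_top G T N) OA" unfolding OA_def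
      using quot_map_open[OF tg sub] tg_open_rtrans[OF tg ab(1) M(2)] unfolding open_map_def by simp
    have o2: "openin (quot_top G T N) OB" unfolding OB_def
      using quot_map_open[OF tg sub] tg_open_rtrans[OF tg ab(2) M(2)] unfolding open_map_def by simp
    have i1: "A \<in> OA"
    proof -
      have "\<one> \<otimes> a \<in> (\<lambda>x. x \<otimes> a) ` M" using \<open>\<one> \<in> M\<close> by (rule imageI)
      then have "N #> (\<one> \<otimes> a) \<in> OA" unfolding OA_def by (rule imageI)
      then show ?thesis using ab by simp
    qed
    have i2: "B \<in> OB"
    proof -
      have "\<one> \<otimes> b \<in> (\<lambda>x. x \<otimes> b) ` M" using \<open>\<one> \<in> M\<close> by (rule imageI)
      then have "N #> (\<one> \<otimes> b) \<in> OB" unfolding OB_def by (rule imageI)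
      then show ?thesis using ab by simp
    qed
    have d: "disjnt OA OB"
    proof (rule ccontr)
      assume "\<not> disjnt OA OB"
      then obtain C where C: "C \<in> OA" "C \<in> OB" unfolding disjnt_def by blast
      obtain m1 where m1: "m1 \<in> M" "C = N #> (m1 \<otimes> a)" using C(1) unfolding OA_def by blast
      obtain m2 where m2: "m2 \<in> M" "C = N #> (m2 \<otimes> b)" using C(2) unfolding OB_def by blast
      have m: "m1 \<in> M" "m2 \<in> M" "N #> (m1 \<otimes> a) = N #> (m2 \<otimes> b)" using m1 m2 by auto
      have mc: "m1 \<in> carrier G" "m2 \<in> carrier G" using m Msub by auto
      have z: "(m1 \<otimes> a) \<otimes> inv (m2 \<otimes> b) \<in> N"
        using rcos_eq_iff[OF grp sub m_closed[OF mc(1) ab(1)] m_closed[OF mc(2) ab(2)]] m(3) by simp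
      have "inv m2 \<otimes> ((m1 \<otimes> a) \<otimes> inv (m2 \<otimes> b)) \<otimes> inv (inv m2) \<in> N"
      proof -
        have nn: "\<forall>x\<in>carrier G. \<forall>h\<in>N. x \<otimes> h \<otimes> inv x \<in> N" using iffD1[OF normal_inv_iff N] by blast
        show ?thesis using bspec[OF bspec[OF nn inv_closed[OF mc(2)]] z] .
      qed
      then have "inv (inv m2 \<otimes> ((m1 \<otimes> a) \<otimes> inv (m2 \<otimes> b)) \<otimes> inv (inv m2)) \<in> N"
        by (rule subgroup.m_inv_closed[OF sub])
      moreover have eq: "inv (inv m2 \<otimes> ((m1 \<otimes> a) \<otimes> inv (m2 \<otimes> b)) \<otimes> inv (inv m2))
          = c \<otimes> (inv m1 \<otimes> m2)" unfolding c_def by (rule conj_alg[OF grp mc ab(1,2)])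
      ultimately have "c \<otimes> (inv m1 \<otimes> m2) \<in> N" by (simp only:)
      moreover have "inv m1 \<otimes> m2 \<in> M"
        using subgroup.m_closed[OF sM subgroup.m_inv_closed[OF sM m(1)] m(2)] .
      then have "inv m1 \<otimes> m2 \<in> W" using M(3) by blast
      then have "c \<otimes> (inv m1 \<otimes> m2) \<notin> N" unfolding W_def by blast
      with \<open>c \<otimes> (inv m1 \<otimes> m2) \<in> N\<close> show False by contradiction
    qed
    show "\<exists>U V. openin (quot_top G T N) U \<and> openin (quot_top G T N) V \<and>
        A \<in> U \<and> B \<in> V \<and> disjnt U V"
      by (rule exI[of _ OA], rule exI[of _ OB], intro conjI o1 o2 i1 i2 d)
  qed
qed

lemma quot_tg:
  fixes G (structure)
  assumes tg: "topological_group G T" and N: "N \<lhd> G"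
  shows "topological_group (G Mod N) (quot_top G T N)"
proof -
  have grp: "group G" using tg_group[OF tg] .
  interpret group G by fact
  have sub: "subgroup N G" using N normal_def by auto
  have top: "topspace T = carrier G" using tg_top[OF tg] .
  define Q where "Q = quot_top G T N"
  have topQ: "topspace Q = rcosets N" unfolding Q_def using topspace_quot_top[OF grp sub top] .
  have carQ: "carrier (G Mod N) = rcosets N" unfolding FactGroup_def by simp
  have multQ: "\<And>A B. A \<otimes>\<^bsub>G Mod N\<^esub> B = A <#> B" unfolding FactGroup_def by simp
  have rc: "\<And>A. A \<in> rcosets N \<Longrightarrow> \<exists>a\<in>carrier G. A = N #> a" unfolding RCOSETS_def by auto
  have piQ: "\<And>a. a \<in> carrier G \<Longrightarrow> N #> a \<in> rcosets N" using rcosetsI'[OF grp sub] by auto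
  have sum: "\<And>a b. a \<in> carrier G \<Longrightarrow> b \<in> carrier G \<Longrightarrow> (N #> a) <#> (N #> b) = N #> (a \<otimes> b)"
    using normal.rcos_sum[OF N] by auto
  have openQ: "\<And>S. openin Q S \<longleftrightarrow> S \<subseteq> rcosets N \<and> openin T (\<Union>S)"
    unfolding Q_def using openin_quot_top[OF grp sub] by auto
  have UnS: "\<And>S. openin Q S \<Longrightarrow> \<Union>S = {x \<in> carrier G. N #> x \<in> S}"
    using rcosets_Union_eq[OF grp sub] openQ by auto
  have piopen: "\<And>W. openin T W \<Longrightarrow> openin Q ((\<lambda>x. N #> x) ` W)"
    using quot_map_open[OF tg sub] unfolding open_map_def Q_def by simp
  have cm: "continuous_map (prod_topology Q Q) Q (\<lambda>(A, B). A \<otimes>\<^bsub>G Mod N\<^esub> B)"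
    unfolding continuous_map_def
  proof (intro conjI allI impI)
    show "(\<lambda>(A, B). A \<otimes>\<^bsub>G Mod N\<^esub> B) \<in> topspace (prod_topology Q Q) \<rightarrow> topspace Q"
    proof
      fix z assume "z \<in> topspace (prod_topology Q Q)"
      then obtain A B where z: "z = (A, B)" "A \<in> rcosets N" "B \<in> rcosets N"
        using topQ by (cases z) auto
      obtain a where a: "a \<in> carrier G" "A = N #> a" using rc z(2) by blast
      obtain b where b: "b \<in> carrier G" "B = N #> b" using rc z(3) by blast
      show "(case z of (A, B) \<Rightarrow> A \<otimes>\<^bsub>G Mod N\<^esub> B) \<in> topspace Q"
        using z a b multQ sum piQ topQ by simp
    qed
  next
    fix S assume S: "openin Q S"
    define P where "P = {z \<in> topspace (prod_topology Q Q). (case z of (A, B) \<Rightarrow> A \<otimes>\<^bsub>G Mod N\<^esub> B) \<in> S}"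
    define Op where "Op = {z \<in> topspace (prod_topology T T). (case z of (x, y) \<Rightarrow> x \<otimes> y) \<in> \<Union>S}"
    have Oo: "openin (prod_topology T T) Op" unfolding Op_def
      using openin_continuous_map_preimage[OF tg_mult[OF tg]] S openQ by blast
    have "openin (prod_topology Q Q) P"
      unfolding openin_prod_topology_alt
    proof (intro allI impI)
      fix A B assume AB: "(A, B) \<in> P"
      then have AB': "A \<in> rcosets N" "B \<in> rcosets N" "A <#> B \<in> S"
        unfolding P_def using topQ multQ by auto
      obtain a where a: "a \<in> carrier G" "A = N #> a" using rc AB'(1) by blast
      obtain b where b: "b \<in> carrier G" "B = N #> b" using rc AB'(2) by blast
      have "N #> (a \<otimes> b) \<in> S" using AB'(3) a b sum by simp
      then have "a \<otimes> b \<in> \<Union>S" using UnS[OF S] a b by auto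
      then have "(a, b) \<in> Op" unfolding Op_def using a b top by auto
      then have "\<exists>U V. openin T U \<and> openin T V \<and> a \<in> U \<and> b \<in> V \<and> U \<times> V \<subseteq> Op"
        using iffD1[OF openin_prod_topology_alt Oo] by blast
      then obtain Wa Wb where W: "openin T Wa" "openin T Wb" "a \<in> Wa" "b \<in> Wb" "Wa \<times> Wb \<subseteq> Op"
        by blast
      have Wc: "Wa \<subseteq> carrier G" "Wb \<subseteq> carrier G"
        using openin_subset[OF W(1)] openin_subset[OF W(2)] top by auto
      have sub2: "(\<lambda>x. N #> x) ` Wa \<times> (\<lambda>x. N #> x) ` Wb \<subseteq> P"
      proof
        fix z assume "z \<in> (\<lambda>x. N #> x) ` Wa \<times> (\<lambda>x. N #> x) ` Wb"
        then obtain x y where xy: "x \<in> Wa" "y \<in> Wb" "z = (N #> x, N #> y)" by auto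
        then have "(x, y) \<in> Op" using W(5) by auto
        then have "x \<otimes> y \<in> \<Union>S" unfolding Op_def by auto
        then have "N #> (x \<otimes> y) \<in> S" using UnS[OF S] by auto
        moreover have "x \<in> carrier G" "y \<in> carrier G" using xy Wc by auto
        ultimately show "z \<in> P" unfolding P_def using xy sum piQ topQ multQ by auto
      qed
      show "\<exists>U V. openin Q U \<and> openin Q V \<and> A \<in> U \<and> B \<in> V \<and> U \<times> V \<subseteq> P"
        apply (rule exI[of _ "(\<lambda>x. N #> x) ` Wa"], rule exI[of _ "(\<lambda>x. N #> x) ` Wb"])
        using piopen[OF W(1)] piopen[OF W(2)] W(3,4) a b sub2 by blast
    qed
    then show "openin (prod_topology Q Q) {z \<in> topspace (prod_topology Q Q). (case z of (A, B) \<Rightarrow> A \<otimes>\<^bsub>G Mod N\<^esub> B) \<in> S}"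
      unfolding P_def .
  qed
  have invQ: "\<And>a. a \<in> carrier G \<Longrightarrow> inv\<^bsub>G Mod N\<^esub> (N #> a) = N #> inv a"
    using normal.inv_FactGroup[OF N] normal.rcos_inv[OF N] carQ piQ by simp
  have ci: "continuous_map Q Q (\<lambda>A. inv\<^bsub>G Mod N\<^esub> A)"
    unfolding continuous_map_def
  proof (intro conjI allI impI)
    show "(\<lambda>A. inv\<^bsub>G Mod N\<^esub> A) \<in> topspace Q \<rightarrow> topspace Q"
    proof
      fix A assume "A \<in> topspace Q"
      then obtain a where a: "a \<in> carrier G" "A = N #> a" using rc topQ by blast
      show "inv\<^bsub>G Mod N\<^esub> A \<in> topspace Q" using a invQ piQ topQ by simp
    qed
  next
    fix S assume S: "openin Q S"
    define P where "P = {A \<in> topspace Q. inv\<^bsub>G Mod N\<^esub> A \<in> S}"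
    have "\<Union>P = {x \<in> carrier G. N #> x \<in> P}"
      using rcosets_Union_eq[OF grp sub] topQ unfolding P_def by auto
    also have "\<dots> = {x \<in> topspace T. inv x \<in> \<Union>S}"
      using UnS[OF S] invQ piQ topQ top unfolding P_def by auto
    finally have eqP: "\<Union>P = {x \<in> topspace T. inv x \<in> \<Union>S}" .
    have "openin T {x \<in> topspace T. inv x \<in> \<Union>S}"
      using openin_continuous_map_preimage[OF tg_inv[OF tg]] S openQ by blast
    then have "openin T (\<Union>P)" by (simp only: eqP)
    then have "openin Q P" using openQ topQ unfolding P_def by auto
    then show "openin Q {A \<in> topspace Q. inv\<^bsub>G Mod N\<^esub> A \<in> S}" unfolding P_def .
  qed
  show ?thesis unfolding topological_group_def
    using normal.factorgroup_is_group[OF N] topQ carQ cm ci unfolding Q_def by auto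
qed

lemma rcos_eq_self:
  assumes "group G" "subgroup M G" "y \<in> carrier G"
  shows "M #>\<^bsub>G\<^esub> y = M \<longleftrightarrow> y \<in> M"
proof -
  have "M #>\<^bsub>G\<^esub> \<one>\<^bsub>G\<^esub> = M" using group.coset_mult_one[OF assms(1)] subgroup.subset[OF assms(2)] by blast
  then show ?thesis using rcos_eq_iff[OF assms(1,2) assms(3) monoid.one_closed[OF group.is_monoid[OF assms(1)]]]
    monoid.inv_one[OF group.is_monoid[OF assms(1)]] monoid.r_one[OF group.is_monoid[OF assms(1)] assms(3)] by simp
qed

lemma index_preimage:
  fixes G (structure)
  assumes N: "N \<lhd> G" and M: "M \<lhd> G Mod N"
  shows "{x \<in> carrier G. N #> x \<in> M} \<lhd> G"
    and "card (rcosets {x \<in> carrier G. N #> x \<in> M}) = card (rcosets\<^bsub>G Mod N\<^esub> M)"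
proof -
  have grp: "group G" using N normal_def by blast
  interpret group G by fact
  have sub: "subgroup N G" using N normal_def by blast
  have gQ: "group (G Mod N)" using normal.factorgroup_is_group[OF N] .
  have gQM: "group ((G Mod N) Mod M)" using normal.factorgroup_is_group[OF M] .
  have subM: "subgroup M (G Mod N)" using M normal_def by blast
  have carQ: "carrier (G Mod N) = rcosets N" unfolding FactGroup_def by simp
  have multQ: "\<And>A B. A \<otimes>\<^bsub>G Mod N\<^esub> B = A <#> B" unfolding FactGroup_def by simp
  have piQ: "\<And>a. a \<in> carrier G \<Longrightarrow> N #> a \<in> carrier (G Mod N)" using rcosetsI'[OF grp sub] carQ by auto
  define psi where "psi = (\<lambda>x. M #>\<^bsub>G Mod N\<^esub> (N #> x))"
  have hom: "psi \<in> hom G ((G Mod N) Mod M)"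
  proof (rule homI)
    fix x assume "x \<in> carrier G"
    then show "psi x \<in> carrier ((G Mod N) Mod M)" unfolding psi_def
      using rcosetsI'[OF gQ subM] piQ by (simp add: FactGroup_def)
  next
    fix x y assume xy: "x \<in> carrier G" "y \<in> carrier G"
    have "N #> (x \<otimes> y) = (N #> x) \<otimes>\<^bsub>G Mod N\<^esub> (N #> y)"
      using normal.rcos_sum[OF N xy] multQ by simp
    then show "psi (x \<otimes> y) = psi x \<otimes>\<^bsub>(G Mod N) Mod M\<^esub> psi y" unfolding psi_def
      using normal.rcos_sum[OF M piQ[OF xy(1)] piQ[OF xy(2)]] by (simp add: FactGroup_def)
  qed
  have gh: "group_hom G ((G Mod N) Mod M) psi"
    unfolding group_hom_def group_hom_axioms_def using grp gQM hom by blast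
  have ker: "kernel G ((G Mod N) Mod M) psi = {x \<in> carrier G. N #> x \<in> M}"
    unfolding kernel_def psi_def using rcos_eq_self[OF gQ subM piQ] by (auto simp: FactGroup_def)
  show "{x \<in> carrier G. N #> x \<in> M} \<lhd> G" using group_hom.normal_kernel[OF gh] ker by simp
  have surj: "psi ` carrier G = carrier ((G Mod N) Mod M)"
  proof
    show "psi ` carrier G \<subseteq> carrier ((G Mod N) Mod M)" using hom unfolding hom_def by auto
    show "carrier ((G Mod N) Mod M) \<subseteq> psi ` carrier G"
    proof
      fix Z2 assume "Z2 \<in> carrier ((G Mod N) Mod M)"
      then obtain Z1 where Z1: "Z1 \<in> carrier (G Mod N)" "Z2 = M #>\<^bsub>G Mod N\<^esub> Z1"
        unfolding FactGroup_def RCOSETS_def by auto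
      then obtain x where x: "x \<in> carrier G" "Z1 = N #> x" using carQ unfolding RCOSETS_def by auto
      show "Z2 \<in> psi ` carrier G" unfolding psi_def using Z1 x by auto
    qed
  qed
  have "G Mod kernel G ((G Mod N) Mod M) psi \<cong> (G Mod N) Mod M"
    using group_hom.FactGroup_iso[OF gh surj] .
  then obtain f where "bij_betw f (carrier (G Mod kernel G ((G Mod N) Mod M) psi)) (carrier ((G Mod N) Mod M))"
    unfolding is_iso_def iso_def by blast
  then have "card (carrier (G Mod kernel G ((G Mod N) Mod M) psi)) = card (carrier ((G Mod N) Mod M))"
    by (rule bij_betw_same_card)
  then show "card (rcosets {x \<in> carrier G. N #> x \<in> M}) = card (rcosets\<^bsub>G Mod N\<^esub> M)"
    using ker by (simp add: FactGroup_def)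
qed

lemma quot_pro_p:
  fixes G (structure)
  assumes pp: "pro_p_group p G T" and N: "N \<lhd> G" and cl: "closedin T N"
  shows "pro_p_group p (G Mod N) (quot_top G T N)"
proof -
  have tg: "topological_group G T" using pro_p_tg[OF pp] .
  have grp: "group G" using tg_group[OF tg] .
  interpret group G by fact
  have sub: "subgroup N G" using N normal_def by auto
  have top: "topspace T = carrier G" using tg_top[OF tg] .
  define Q where "Q = quot_top G T N"
  have gQ: "group (G Mod N)" using normal.factorgroup_is_group[OF N] .
  have topQ: "topspace Q = rcosets N" unfolding Q_def using topspace_quot_top[OF grp sub top] .
  have carQ: "carrier (G Mod N) = rcosets N" unfolding FactGroup_def by simp
  have oneQ: "\<one>\<^bsub>G Mod N\<^esub> = N" unfolding FactGroup_def by simp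
  have multQ: "\<And>A B. A \<otimes>\<^bsub>G Mod N\<^esub> B = A <#> B" unfolding FactGroup_def by simp
  have rc: "\<And>A. A \<in> rcosets N \<Longrightarrow> \<exists>a\<in>carrier G. A = N #> a" unfolding RCOSETS_def by auto
  have piQ: "\<And>a. a \<in> carrier G \<Longrightarrow> N #> a \<in> rcosets N" using rcosetsI'[OF grp sub] by auto
  have openQ: "\<And>S. openin Q S \<longleftrightarrow> S \<subseteq> rcosets N \<and> openin T (\<Union>S)"
    unfolding Q_def using openin_quot_top[OF grp sub] by auto
  have UnS: "\<And>S. openin Q S \<Longrightarrow> \<Union>S = {x \<in> carrier G. N #> x \<in> S}"
    using rcosets_Union_eq[OF grp sub] openQ by auto
  have piopen: "\<And>W. openin T W \<Longrightarrow> openin Q ((\<lambda>x. N #> x) ` W)"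
    using quot_map_open[OF tg sub] unfolding open_map_def Q_def by simp
  have picont: "continuous_map T Q (\<lambda>x. N #> x)"
    unfolding Q_def using quot_map_continuous[OF grp sub top] .
  have hpi: "group_hom G (G Mod N) (\<lambda>x. N #> x)"
    unfolding group_hom_def group_hom_axioms_def using grp gQ normal.r_coset_hom_Mod[OF N] by blast
  have tgQ: "topological_group (G Mod N) Q" unfolding Q_def using quot_tg[OF tg N] .
  have "compactin T (topspace T)" using pp unfolding pro_p_group_def compact_space_def by blast
  then have "compactin Q ((\<lambda>x. N #> x) ` topspace T)" using image_compactin picont by blast
  moreover have "(\<lambda>x. N #> x) ` topspace T = topspace Q"
    using topQ top unfolding RCOSETS_def by auto
  ultimately have cQ: "compact_space Q" unfolding compact_space_def by simp
  have hQ: "Hausdorff_space Q" unfolding Q_def using quot_Hausdorff[OF pp N cl] .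
  have base: "\<And>W. openin T W \<Longrightarrow> \<one> \<in> W \<Longrightarrow> \<exists>M. M \<lhd> G \<and> openin T M \<and> M \<subseteq> W"
    using pp unfolding pro_p_group_def by auto
  have idx: "\<And>M. M \<lhd> G \<Longrightarrow> openin T M \<Longrightarrow> \<exists>k::nat. card (rcosets M) = p ^ k"
    using pp unfolding pro_p_group_def by auto
  have baseQ: "\<forall>W. openin Q W \<and> \<one>\<^bsub>G Mod N\<^esub> \<in> W \<longrightarrow>
      (\<exists>M. M \<lhd> G Mod N \<and> openin Q M \<and> M \<subseteq> W)"
  proof (intro allI impI)
    fix W assume W: "openin Q W \<and> \<one>\<^bsub>G Mod N\<^esub> \<in> W"
    have "\<one> \<in> \<Union>W" using W oneQ subgroup.one_closed[OF sub] by auto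
    moreover have "openin T (\<Union>W)" using W openQ by auto
    ultimately obtain M where M: "M \<lhd> G" "openin T M" "M \<subseteq> \<Union>W" using base by blast
    have sM: "subgroup M G" using M(1) normal_def by blast
    define M' where "M' = (\<lambda>x. N #> x) ` M"
    have "subgroup M' (G Mod N)" unfolding M'_def using group_hom.subgroup_img_is_subgroup[OF hpi sM] .
    moreover have "\<forall>x\<in>carrier (G Mod N). \<forall>h\<in>M'. x \<otimes>\<^bsub>G Mod N\<^esub> h \<otimes>\<^bsub>G Mod N\<^esub> inv\<^bsub>G Mod N\<^esub> x \<in> M'"
    proof (intro ballI)
      fix x h assume x: "x \<in> carrier (G Mod N)" and h: "h \<in> M'"
      have "x \<in> rcosets N" using x carQ by simp
      from rc[OF this] obtain a where a: "a \<in> carrier G" "x = N #> a" by blast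
      obtain m where m: "m \<in> M" "h = N #> m" using h unfolding M'_def by blast
      have mc: "m \<in> carrier G" using subgroup.mem_carrier[OF sM m(1)] .
      have "x \<otimes>\<^bsub>G Mod N\<^esub> h \<otimes>\<^bsub>G Mod N\<^esub> inv\<^bsub>G Mod N\<^esub> x = N #> (a \<otimes> m \<otimes> inv a)"
        using a m mc group_hom.hom_mult[OF hpi] group_hom.hom_inv[OF hpi] by simp
      moreover have "a \<otimes> m \<otimes> inv a \<in> M" using M(1) normal_inv_iff a m by blast
      ultimately show "x \<otimes>\<^bsub>G Mod N\<^esub> h \<otimes>\<^bsub>G Mod N\<^esub> inv\<^bsub>G Mod N\<^esub> x \<in> M'"
        unfolding M'_def by simp
    qed
    ultimately have "M' \<lhd> G Mod N" using group.normal_inv_iff[OF gQ] by blast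
    moreover have "openin Q M'" unfolding M'_def using piopen[OF M(2)] .
    moreover have "M' \<subseteq> W"
    proof
      fix y assume "y \<in> M'"
      then obtain m where m: "m \<in> M" "y = N #> m" unfolding M'_def by blast
      then have "m \<in> \<Union>W" using M(3) by blast
      then have "m \<in> {x \<in> carrier G. N #> x \<in> W}" using UnS[OF conjunct1[OF W]] by simp
      then show "y \<in> W" using m(2) by simp
    qed
    ultimately show "\<exists>M. M \<lhd> G Mod N \<and> openin Q M \<and> M \<subseteq> W" by (intro exI[of _ M'] conjI)
  qed
  have idxQ: "\<forall>M. M \<lhd> G Mod N \<and> openin Q M \<longrightarrow> (\<exists>k::nat. card (rcosets\<^bsub>G Mod N\<^esub> M) = p ^ k)"
  proof (intro allI impI)
    fix M assume M: "M \<lhd> G Mod N \<and> openin Q M"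
    have "openin T {x \<in> topspace T. N #> x \<in> M}"
      using openin_continuous_map_preimage[OF picont conjunct2[OF M]] .
    then have "openin T {x \<in> carrier G. N #> x \<in> M}" using top by simp
    from idx[OF index_preimage(1)[OF N conjunct1[OF M]] this]
    obtain k where "card (rcosets {x \<in> carrier G. N #> x \<in> M}) = p ^ k" by blast
    then have "card (rcosets\<^bsub>G Mod N\<^esub> M) = p ^ k"
      using index_preimage(2)[OF N conjunct1[OF M]] by simp
    then show "\<exists>k::nat. card (rcosets\<^bsub>G Mod N\<^esub> M) = p ^ k" by blast
  qed
  show ?thesis unfolding pro_p_group_def Q_def[symmetric]
    by (intro conjI tgQ cQ hQ baseQ idxQ)
qed

lemma closure_normal:
  fixes G (structure)
  assumes tg: "topological_group G T" and H: "H \<lhd> G"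
  shows "T closure_of H \<lhd> G"
proof -
  have grp: "group G" using tg_group[OF tg] .
  interpret group G by fact
  have sH: "subgroup H G" using H normal_def by blast
  have top: "topspace T = carrier G" using tg_top[OF tg] .
  have Hc: "H \<subseteq> topspace T" unfolding top by (rule subgroup.subset[OF sH])
  define C where "C = T closure_of H"
  have Cc: "C \<subseteq> carrier G" unfolding C_def top[symmetric] by (rule closure_of_subset_topspace)
  have HC: "H \<subseteq> C" unfolding C_def using closure_of_subset[OF Hc] .
  have inv: "\<And>a. a \<in> C \<Longrightarrow> inv a \<in> C"
  proof -
    fix a assume a: "a \<in> C"
    have "(\<lambda>x. inv x) ` C \<subseteq> T closure_of ((\<lambda>x. inv x) ` H)"
      unfolding C_def using continuous_map_image_closure_subset[OF tg_inv[OF tg]] .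
    also have "\<dots> \<subseteq> C" unfolding C_def
      by (rule closure_of_mono) (use subgroup.m_inv_closed[OF sH] in blast)
    finally show "inv a \<in> C" using a by blast
  qed
  have mult: "\<And>a b. a \<in> C \<Longrightarrow> b \<in> C \<Longrightarrow> a \<otimes> b \<in> C"
  proof -
    fix a b assume ab: "a \<in> C" "b \<in> C"
    have "(a, b) \<in> prod_topology T T closure_of (H \<times> H)" using ab unfolding C_def closure_of_Times by simp
    then have "(\<lambda>(x, y). x \<otimes> y) (a, b) \<in> T closure_of ((\<lambda>(x, y). x \<otimes> y) ` (H \<times> H))"
      using continuous_map_image_closure_subset[OF tg_mult[OF tg]] by blast
    moreover have "T closure_of ((\<lambda>(x, y). x \<otimes> y) ` (H \<times> H)) \<subseteq> C" unfolding C_def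
      by (rule closure_of_mono) (use subgroup.m_closed[OF sH] in auto)
    ultimately show "a \<otimes> b \<in> C" by auto
  qed
  have sC: "subgroup C G"
    by (rule subgroupI[OF Cc _ inv mult]) (use HC subgroup.one_closed[OF sH] in blast)+
  have conj: "\<And>g h. g \<in> carrier G \<Longrightarrow> h \<in> C \<Longrightarrow> g \<otimes> h \<otimes> inv g \<in> C"
  proof -
    fix g h assume g: "g \<in> carrier G" and h: "h \<in> C"
    have cc: "continuous_map T T (\<lambda>x. g \<otimes> x \<otimes> inv g)"
      using continuous_map_compose[OF tg_lmult[OF tg g] tg_rmult[OF tg inv_closed[OF g]]]
      by (simp add: o_def)
    have "(\<lambda>x. g \<otimes> x \<otimes> inv g) ` C \<subseteq> T closure_of ((\<lambda>x. g \<otimes> x \<otimes> inv g) ` H)"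
      unfolding C_def using continuous_map_image_closure_subset[OF cc] .
    also have "\<dots> \<subseteq> C" unfolding C_def
    proof (rule closure_of_mono)
      show "(\<lambda>x. g \<otimes> x \<otimes> inv g) ` H \<subseteq> H"
        using iffD1[OF normal_inv_iff H] g by blast
    qed
    finally show "g \<otimes> h \<otimes> inv g \<in> C" using h by blast
  qed
  show ?thesis unfolding C_def[symmetric] using sC conj normal_inv_iff by blast
qed

lemma union_coset_const:
  assumes gE: "group GE" and grp: "group G" and U: "U \<lhd> G"
    and f: "f \<in> hom GE G" and K: "subgroup K GE" and fK: "\<And>k. k \<in> K \<Longrightarrow> f k \<in> U"
    and x: "x \<in> carrier GE"
  shows "(\<Union>y\<in>K #>\<^bsub>GE\<^esub> x. U #>\<^bsub>G\<^esub> f y) = U #>\<^bsub>G\<^esub> f x"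
proof -
  have gh: "group_hom GE G f" unfolding group_hom_def group_hom_axioms_def using gE grp f by blast
  have sU: "subgroup U G" using U normal_def by blast
  have fx: "f x \<in> carrier G" using f x unfolding hom_def by auto
  have each: "\<And>y. y \<in> K #>\<^bsub>GE\<^esub> x \<Longrightarrow> U #>\<^bsub>G\<^esub> f y = U #>\<^bsub>G\<^esub> f x"
  proof -
    fix y assume "y \<in> K #>\<^bsub>GE\<^esub> x"
    then obtain k where k: "k \<in> K" "y = k \<otimes>\<^bsub>GE\<^esub> x" unfolding r_coset_def by auto
    have kc: "k \<in> carrier GE" using subgroup.mem_carrier[OF K k(1)] .
    have fk: "f k \<in> carrier G" using f kc unfolding hom_def by auto
    interpret G: group G by fact
    have fy: "f y = f k \<otimes>\<^bsub>G\<^esub> f x" using group_hom.hom_mult[OF gh kc x] k by simp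
    have "f k \<otimes>\<^bsub>G\<^esub> f x \<otimes>\<^bsub>G\<^esub> inv\<^bsub>G\<^esub> f x = f k"
      using fk fx by (simp add: G.m_assoc)
    then have "f y \<otimes>\<^bsub>G\<^esub> inv\<^bsub>G\<^esub> f x \<in> U" using fy fK[OF k(1)] by simp
    moreover have "f y \<in> carrier G" using fy fk fx by simp
    ultimately show "U #>\<^bsub>G\<^esub> f y = U #>\<^bsub>G\<^esub> f x"
      using rcos_eq_iff[OF grp sU _ fx] by blast
  qed
  have "x \<in> K #>\<^bsub>GE\<^esub> x" using group.rcos_self[OF gE x K] .
  then show ?thesis using each by blast
qed

lemma hom_comp: "f \<in> hom A B \<Longrightarrow> g \<in> hom B C \<Longrightarrow> (\<lambda>x. g (f x)) \<in> hom A C"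
  unfolding hom_def by (auto simp: Pi_def)

locale P214 =
  fixes p :: nat
    and V :: "'v set" and E :: "'e set" and d0 d1 :: "'e \<Rightarrow> 'v" and D :: "'e set"
    and GV :: "'v \<Rightarrow> ('a, 'm) monoid_scheme" and TV :: "'v \<Rightarrow> 'a topology"
    and GE :: "'e \<Rightarrow> ('b, 'n) monoid_scheme" and TE :: "'e \<Rightarrow> 'b topology"
    and del0 del1 :: "'e \<Rightarrow> 'b \<Rightarrow> 'a"
    and G :: "('g, 'k) monoid_scheme" (structure) and T :: "'g topology"
    and iv :: "'v \<Rightarrow> 'a \<Rightarrow> 'g" and t :: "'e \<Rightarrow> 'g"
    and U :: "'g set"
  assumes gog: "graph_of_pro_p_groups p V E d0 d1 GV TV GE TE del0 del1"
    and pi1: "is_pi1 p V E d0 d1 D GV TV GE TE del0 del1 G T iv t"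
    and Un: "U \<lhd> G" and Ucl: "closedin T U"
begin

lemma pp: "pro_p_group p G T" using pi1 unfolding is_pi1_def by blast
lemma tg: "topological_group G T" using pro_p_tg[OF pp] .
lemma grp: "group G" using tg_group[OF tg] .
lemma top: "topspace T = carrier G" using tg_top[OF tg] .
lemma sU: "subgroup U G" using Un normal_def by blast

sublocale group G by (rule grp)

lemma ivh: "v \<in> V \<Longrightarrow> iv v \<in> cont_hom (GV v) (TV v) G T"
  using pi1 unfolding is_pi1_def by blast
lemma rel: "pi1_relations V E d0 d1 D GE del0 del1 G iv t"
  using pi1 unfolding is_pi1_def by blast
lemma gen: "closed_generate G T ((\<Union>v\<in>V. iv v ` carrier (GV v)) \<union> t ` E) = carrier G"
  using pi1 unfolding is_pi1_def by blast
lemma ppV: "v \<in> V \<Longrightarrow> pro_p_group p (GV v) (TV v)"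
  using gog unfolding graph_of_pro_p_groups_def by blast
lemma ppE: "e \<in> E \<Longrightarrow> pro_p_group p (GE e) (TE e)"
  using gog unfolding graph_of_pro_p_groups_def by blast
lemma dV: "e \<in> E \<Longrightarrow> d0 e \<in> V" "e \<in> E \<Longrightarrow> d1 e \<in> V"
  using gog unfolding graph_of_pro_p_groups_def graph_def by blast+
lemma del0h: "e \<in> E \<Longrightarrow> del0 e \<in> cont_hom (GE e) (TE e) (GV (d0 e)) (TV (d0 e))"
  using gog unfolding graph_of_pro_p_groups_def by blast
lemma del1h: "e \<in> E \<Longrightarrow> del1 e \<in> cont_hom (GE e) (TE e) (GV (d1 e)) (TV (d1 e))"
  using gog unfolding graph_of_pro_p_groups_def by blast

lemma gV: "v \<in> V \<Longrightarrow> group (GV v)" using tg_group[OF pro_p_tg[OF ppV]] by blast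
lemma gE: "e \<in> E \<Longrightarrow> group (GE e)" using tg_group[OF pro_p_tg[OF ppE]] by blast
lemma ivhom: "v \<in> V \<Longrightarrow> group_hom (GV v) G (iv v)"
  using ivh gV grp unfolding group_hom_def group_hom_axioms_def cont_hom_def by blast
lemma ivc: "v \<in> V \<Longrightarrow> x \<in> carrier (GV v) \<Longrightarrow> iv v x \<in> carrier G"
  using group_hom.hom_closed[OF ivhom] by blast
lemma ivcont: "v \<in> V \<Longrightarrow> continuous_map (TV v) T (iv v)"
  using ivh unfolding cont_hom_def by blast
lemma topV: "v \<in> V \<Longrightarrow> topspace (TV v) = carrier (GV v)"
  using tg_top[OF pro_p_tg[OF ppV]] by blast
lemma compV: "v \<in> V \<Longrightarrow> compact_space (TV v)"
  using ppV unfolding pro_p_group_def by blast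

lemma f0hom: "e \<in> E \<Longrightarrow> (\<lambda>x. iv (d0 e) (del0 e x)) \<in> hom (GE e) G"
proof -
  assume e: "e \<in> E"
  have "del0 e \<in> hom (GE e) (GV (d0 e))" using del0h[OF e] unfolding cont_hom_def by blast
  moreover have "iv (d0 e) \<in> hom (GV (d0 e)) G" using ivh[OF dV(1)[OF e]] unfolding cont_hom_def by blast
  ultimately show ?thesis by (rule hom_comp)
qed

lemma f1hom: "e \<in> E \<Longrightarrow> (\<lambda>x. iv (d1 e) (del1 e x)) \<in> hom (GE e) G"
proof -
  assume e: "e \<in> E"
  have "del1 e \<in> hom (GE e) (GV (d1 e))" using del1h[OF e] unfolding cont_hom_def by blast
  moreover have "iv (d1 e) \<in> hom (GV (d1 e)) G" using ivh[OF dV(2)[OF e]] unfolding cont_hom_def by blast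
  ultimately show ?thesis by (rule hom_comp)
qed

definition S where
  "S = {y. \<exists>v\<in>V. \<exists>g\<in>carrier G. \<exists>x\<in>carrier (GV v). y = inv g \<otimes> iv v x \<otimes> g \<and> y \<in> U}"

definition Ut where "Ut = U_tilde G T V GV iv U"

lemma Ut_eq: "Ut = T closure_of (generate G S)"
  unfolding Ut_def U_tilde_def closed_generate_def S_def by simp

lemma S_U: "S \<subseteq> U" unfolding S_def by blast
lemma S_carrier: "S \<subseteq> carrier G" using S_U subgroup.subset[OF sU] by blast

lemma conj_alg2:
  assumes "g \<in> carrier G" "g' \<in> carrier G" "y \<in> carrier G"
  shows "g \<otimes> (inv g' \<otimes> y \<otimes> g') \<otimes> inv g = inv (g' \<otimes> inv g) \<otimes> y \<otimes> (g' \<otimes> inv g)"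
  using assms by (simp add: m_assoc inv_mult_group)

lemma S_conj: "h \<in> S \<Longrightarrow> g \<in> carrier G \<Longrightarrow> g \<otimes> h \<otimes> inv g \<in> S"
proof -
  assume h: "h \<in> S" and g: "g \<in> carrier G"
  then obtain v g' x where vgx: "v \<in> V" "g' \<in> carrier G" "x \<in> carrier (GV v)"
    "h = inv g' \<otimes> iv v x \<otimes> g'" "h \<in> U" unfolding S_def by blast
  have y: "iv v x \<in> carrier G" using ivc[OF vgx(1,3)] .
  have eq: "g \<otimes> h \<otimes> inv g = inv (g' \<otimes> inv g) \<otimes> iv v x \<otimes> (g' \<otimes> inv g)"
    using conj_alg2[OF g vgx(2) y] vgx(4) by simp
  have "g \<otimes> h \<otimes> inv g \<in> U" using iffD1[OF normal_inv_iff Un] g vgx(5) by blast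
  moreover have "g' \<otimes> inv g \<in> carrier G" using g vgx(2) by simp
  ultimately show ?thesis unfolding S_def using vgx(1,3) eq by blast
qed

lemma gen_normal: "generate G S \<lhd> G"
  using normal_generateI[OF S_carrier S_conj] by blast

lemma Ut_normal: "Ut \<lhd> G"
  unfolding Ut_eq using closure_normal[OF tg gen_normal] .

lemma sUt: "subgroup Ut G" using Ut_normal normal_def by blast

lemma Ut_closed: "closedin T Ut" unfolding Ut_eq by (rule closedin_closure_of)

lemma gen_U: "generate G S \<subseteq> U" using generate_subgroup_incl[OF S_U sU] .

lemma Ut_U: "Ut \<subseteq> U" unfolding Ut_eq using closure_of_minimal[OF gen_U Ucl] .

lemma gen_Ut: "generate G S \<subseteq> Ut"
proof -
  have "generate G S \<subseteq> topspace T" unfolding top using generate_incl[OF S_carrier] .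
  then show ?thesis unfolding Ut_eq by (rule closure_of_subset)
qed

lemma S_Ut: "S \<subseteq> Ut"
proof
  fix x assume "x \<in> S"
  then have "x \<in> generate G S" by (rule generate.incl)
  then show "x \<in> Ut" using gen_Ut by (rule subsetD[rotated])
qed

lemma ivU_Ut:
  assumes v: "v \<in> V" and z: "z \<in> carrier (GV v)" and zU: "iv v z \<in> U"
  shows "iv v z \<in> Ut"
proof -
  have "inv \<one> \<otimes> iv v z \<otimes> \<one> = iv v z" using ivc[OF v z] by simp
  then have "iv v z \<in> S" unfolding S_def using v z zU one_closed by force
  then show ?thesis using S_Ut by blast
qed

definition ivq where "ivq v C = Ut #> iv v (SOME x. x \<in> carrier (GV v) \<and> C = U #> iv v x)"
definition tq where "tq e = Ut #> t e"

lemma ivq_eq: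
  assumes v: "v \<in> V" and x: "x \<in> carrier (GV v)"
  shows "ivq v (U #> iv v x) = Ut #> iv v x"
proof -
  define x' where "x' = (SOME x'. x' \<in> carrier (GV v) \<and> U #> iv v x = U #> iv v x')"
  have "x' \<in> carrier (GV v) \<and> U #> iv v x = U #> iv v x'"
    unfolding x'_def by (rule someI[of _ x]) (use x in simp)
  then have x': "x' \<in> carrier (GV v)" "U #> iv v x' = U #> iv v x" by auto
  have gh: "group_hom (GV v) G (iv v)" using ivhom[OF v] .
  have c: "iv v x \<in> carrier G" "iv v x' \<in> carrier G" using ivc[OF v] x x'(1) by auto
  have "iv v x' \<otimes> inv (iv v x) \<in> U" using iffD1[OF rcos_eq_iff[OF grp sU c(2) c(1)] x'(2)] .
  moreover have "iv v x' \<otimes> inv (iv v x) = iv v (x' \<otimes>\<^bsub>GV v\<^esub> inv\<^bsub>GV v\<^esub> x)"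
    using group_hom.hom_mult[OF gh x'(1) group.inv_closed[OF gV[OF v] x]] group_hom.hom_inv[OF gh x] by simp
  moreover have "x' \<otimes>\<^bsub>GV v\<^esub> inv\<^bsub>GV v\<^esub> x \<in> carrier (GV v)"
    using x x'(1) gV[OF v] by (simp add: group.inv_closed monoid.m_closed group.is_monoid)
  ultimately have "iv v x' \<otimes> inv (iv v x) \<in> Ut" using ivU_Ut[OF v] by simp
  then have "Ut #> iv v x' = Ut #> iv v x" using rcos_eq_iff[OF grp sUt c(2) c(1)] by simp
  then show ?thesis unfolding ivq_def x'_def[symmetric] by simp
qed

lemma carGU: "carrier (GU_vertex G U GV iv v) = (\<lambda>x. U #> iv v x) ` carrier (GV v)"
  unfolding GU_vertex_def by simp
lemma multGU: "A \<otimes>\<^bsub>GU_vertex G U GV iv v\<^esub> B = A <#> B"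
  unfolding GU_vertex_def FactGroup_def by simp
lemma carQ: "carrier (G Mod N) = rcosets N" unfolding FactGroup_def by simp
lemma multQ: "A \<otimes>\<^bsub>G Mod N\<^esub> B = A <#> B" unfolding FactGroup_def by simp

lemma ivq_hom:
  assumes v: "v \<in> V"
  shows "ivq v \<in> hom (GU_vertex G U GV iv v) (G Mod Ut)"
proof (rule homI)
  fix C assume "C \<in> carrier (GU_vertex G U GV iv v)"
  then obtain x where x: "x \<in> carrier (GV v)" "C = U #> iv v x" unfolding carGU by blast
  show "ivq v C \<in> carrier (G Mod Ut)" unfolding carQ x(2) ivq_eq[OF v x(1)]
    using rcosetsI'[OF grp sUt ivc[OF v x(1)]] .
next
  fix C1 C2 assume "C1 \<in> carrier (GU_vertex G U GV iv v)" "C2 \<in> carrier (GU_vertex G U GV iv v)"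
  then obtain x y where x: "x \<in> carrier (GV v)" "C1 = U #> iv v x"
    and y: "y \<in> carrier (GV v)" "C2 = U #> iv v y" unfolding carGU by blast
  have xy: "x \<otimes>\<^bsub>GV v\<^esub> y \<in> carrier (GV v)"
    using x y gV[OF v] by (simp add: monoid.m_closed group.is_monoid)
  have hm: "iv v (x \<otimes>\<^bsub>GV v\<^esub> y) = iv v x \<otimes> iv v y"
    using group_hom.hom_mult[OF ivhom[OF v] x(1) y(1)] .
  have "C1 \<otimes>\<^bsub>GU_vertex G U GV iv v\<^esub> C2 = U #> iv v (x \<otimes>\<^bsub>GV v\<^esub> y)"
    unfolding multGU x(2) y(2) hm using normal.rcos_sum[OF Un ivc[OF v x(1)] ivc[OF v y(1)]] .
  then have "ivq v (C1 \<otimes>\<^bsub>GU_vertex G U GV iv v\<^esub> C2) = Ut #> (iv v x \<otimes> iv v y)"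
    using ivq_eq[OF v xy] hm by simp
  also have "\<dots> = (Ut #> iv v x) <#> (Ut #> iv v y)"
    using normal.rcos_sum[OF Ut_normal ivc[OF v x(1)] ivc[OF v y(1)]] by simp
  also have "\<dots> = ivq v C1 \<otimes>\<^bsub>G Mod Ut\<^esub> ivq v C2"
    unfolding multQ x(2) y(2) ivq_eq[OF v x(1)] ivq_eq[OF v y(1)] ..
  finally show "ivq v (C1 \<otimes>\<^bsub>GU_vertex G U GV iv v\<^esub> C2) = ivq v C1 \<otimes>\<^bsub>G Mod Ut\<^esub> ivq v C2" .
qed

lemma ivq_cont:
  assumes v: "v \<in> V"
  shows "continuous_map (GU_vertex_top G T U GV iv v) (quot_top G T Ut) (ivq v)"
proof -
  define Im where "Im = (\<lambda>x. U #> iv v x) ` carrier (GV v)"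
  have topGU: "GU_vertex_top G T U GV iv v = subtopology (quot_top G T U) Im"
    unfolding GU_vertex_top_def Im_def ..
  have c1: "continuous_map (TV v) (quot_top G T U) (\<lambda>x. U #> iv v x)"
    using continuous_map_compose[OF ivcont[OF v] quot_map_continuous[OF grp sU top]]
    by (simp add: o_def)
  have c2: "continuous_map (TV v) (subtopology (quot_top G T U) Im) (\<lambda>x. U #> iv v x)"
    unfolding continuous_map_in_subtopology using c1 topV[OF v] unfolding Im_def by auto
  have H: "Hausdorff_space (subtopology (quot_top G T U) Im)"
    using Hausdorff_space_subtopology[OF quot_Hausdorff[OF pp Un Ucl]] .
  have cl: "closed_map (TV v) (subtopology (quot_top G T U) Im) (\<lambda>x. U #> iv v x)"
    using continuous_imp_closed_map[OF c2 compV[OF v] H] .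
  have "Im \<subseteq> rcosets U" unfolding Im_def using rcosetsI'[OF grp sU] ivc[OF v] by blast
  then have "topspace (subtopology (quot_top G T U) Im) = Im"
    using topspace_quot_top[OF grp sU top] by auto
  then have su: "(\<lambda>x. U #> iv v x) ` topspace (TV v) = topspace (subtopology (quot_top G T U) Im)"
    unfolding topV[OF v] Im_def by simp
  have qm: "quotient_map (TV v) (subtopology (quot_top G T U) Im) (\<lambda>x. U #> iv v x)"
    using continuous_closed_imp_quotient_map[OF c2 cl su] .
  have c3: "continuous_map (TV v) (quot_top G T Ut) (\<lambda>x. Ut #> iv v x)"
    using continuous_map_compose[OF ivcont[OF v] quot_map_continuous[OF grp sUt top]]
    by (simp add: o_def)
  have "continuous_map (TV v) (quot_top G T Ut) (ivq v \<circ> (\<lambda>x. U #> iv v x))"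
    using continuous_map_eq[OF c3] ivq_eq[OF v] topV[OF v] by simp
  then show ?thesis unfolding topGU using continuous_compose_quotient_map[OF qm] by blast
qed

lemma relG:
  "e \<in> E \<Longrightarrow> t e \<in> carrier G"
  "e \<in> D \<Longrightarrow> t e = \<one>"
  "e \<in> E \<Longrightarrow> x \<in> carrier (GE e) \<Longrightarrow> iv (d0 e) (del0 e x) = t e \<otimes> iv (d1 e) (del1 e x) \<otimes> inv (t e)"
  using rel unfolding pi1_relations_def by blast+

lemma f1gh: "e \<in> E \<Longrightarrow> group_hom (GE e) G (\<lambda>x. iv (d1 e) (del1 e x))"
  unfolding group_hom_def group_hom_axioms_def using gE grp f1hom by blast

lemma sK: assumes e: "e \<in> E" shows "subgroup (edge_kernel G U d1 GE del1 iv e) (GE e)"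
proof -
  interpret h: group_hom "GE e" G "\<lambda>x. iv (d1 e) (del1 e x)" using f1gh[OF e] .
  show ?thesis unfolding edge_kernel_def
  proof (rule h.G.subgroupI)
    show "{x \<in> carrier (GE e). iv (d1 e) (del1 e x) \<in> U} \<subseteq> carrier (GE e)" by blast
    have "iv (d1 e) (del1 e \<one>\<^bsub>GE e\<^esub>) \<in> U" using h.hom_one subgroup.one_closed[OF sU] by simp
    then show "{x \<in> carrier (GE e). iv (d1 e) (del1 e x) \<in> U} \<noteq> {}" by blast
  next
    fix a assume a: "a \<in> {x \<in> carrier (GE e). iv (d1 e) (del1 e x) \<in> U}"
    then have "iv (d1 e) (del1 e (inv\<^bsub>GE e\<^esub> a)) = inv (iv (d1 e) (del1 e a))" using h.hom_inv by simp
    then show "inv\<^bsub>GE e\<^esub> a \<in> {x \<in> carrier (GE e). iv (d1 e) (del1 e x) \<in> U}"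
      using a subgroup.m_inv_closed[OF sU] by simp
  next
    fix a b assume a: "a \<in> {x \<in> carrier (GE e). iv (d1 e) (del1 e x) \<in> U}"
      and b: "b \<in> {x \<in> carrier (GE e). iv (d1 e) (del1 e x) \<in> U}"
    then have "iv (d1 e) (del1 e (a \<otimes>\<^bsub>GE e\<^esub> b)) = iv (d1 e) (del1 e a) \<otimes> iv (d1 e) (del1 e b)"
      using h.hom_mult by simp
    then show "a \<otimes>\<^bsub>GE e\<^esub> b \<in> {x \<in> carrier (GE e). iv (d1 e) (del1 e x) \<in> U}"
      using a b subgroup.m_closed[OF sU] by simp
  qed
qed

lemma K0: assumes e: "e \<in> E" and k: "k \<in> edge_kernel G U d1 GE del1 iv e"
  shows "iv (d0 e) (del0 e k) \<in> U"
proof -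
  have kc: "k \<in> carrier (GE e)" and k1: "iv (d1 e) (del1 e k) \<in> U" using k unfolding edge_kernel_def by auto
  have "t e \<otimes> iv (d1 e) (del1 e k) \<otimes> inv (t e) \<in> U"
    using iffD1[OF normal_inv_iff Un] relG(1)[OF e] k1 by blast
  then show ?thesis using relG(3)[OF e kc] by simp
qed

lemma gudel0:
  assumes e: "e \<in> E" and x: "x \<in> carrier (GE e)"
  shows "GU_del G U d0 del0 iv e (edge_kernel G U d1 GE del1 iv e #>\<^bsub>GE e\<^esub> x) = U #> iv (d0 e) (del0 e x)"
  unfolding GU_del_def
  using union_coset_const[OF gE[OF e] grp Un f0hom[OF e] sK[OF e] K0[OF e] x] .

lemma gudel1:
  assumes e: "e \<in> E" and x: "x \<in> carrier (GE e)"
  shows "GU_del G U d1 del1 iv e (edge_kernel G U d1 GE del1 iv e #>\<^bsub>GE e\<^esub> x) = U #> iv (d1 e) (del1 e x)"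
  unfolding GU_del_def
  using union_coset_const[OF gE[OF e] grp Un f1hom[OF e] sK[OF e] _ x] unfolding edge_kernel_def by blast

lemma piUt: "group_hom G (G Mod Ut) (\<lambda>x. Ut #> x)"
  unfolding group_hom_def group_hom_axioms_def
  using grp normal.factorgroup_is_group[OF Ut_normal] normal.r_coset_hom_Mod[OF Ut_normal] by blast

lemma relQ: "pi1_relations V E d0 d1 D (GU_edge G U d1 GE del1 iv) (GU_del G U d0 del0 iv)
    (GU_del G U d1 del1 iv) (G Mod Ut) ivq tq"
  unfolding pi1_relations_def
proof (intro conjI ballI)
  fix e assume e: "e \<in> E"
  show "tq e \<in> carrier (G Mod Ut)" unfolding tq_def carQ using rcosetsI'[OF grp sUt relG(1)[OF e]] .
next
  fix e assume e: "e \<in> D"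
  have "Ut #> \<one> = Ut" using coset_mult_one subgroup.subset[OF sUt] by blast
  then show "tq e = \<one>\<^bsub>G Mod Ut\<^esub>" unfolding tq_def relG(2)[OF e] by (simp add: FactGroup_def)
next
  fix e C assume e: "e \<in> E" and C: "C \<in> carrier (GU_edge G U d1 GE del1 iv e)"
  then obtain x where x: "x \<in> carrier (GE e)" "C = edge_kernel G U d1 GE del1 iv e #>\<^bsub>GE e\<^esub> x"
    unfolding GU_edge_def FactGroup_def RCOSETS_def by auto
  have x0: "del0 e x \<in> carrier (GV (d0 e))" and x1: "del1 e x \<in> carrier (GV (d1 e))"
    using del0h[OF e] del1h[OF e] x(1) unfolding cont_hom_def hom_def by auto
  have a1: "iv (d1 e) (del1 e x) \<in> carrier G" using ivc[OF dV(2)[OF e] x1] .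
  have te: "t e \<in> carrier G" using relG(1)[OF e] .
  have "ivq (d0 e) (GU_del G U d0 del0 iv e C) = Ut #> iv (d0 e) (del0 e x)"
    unfolding x(2) gudel0[OF e x(1)] ivq_eq[OF dV(1)[OF e] x0] ..
  also have "\<dots> = Ut #> (t e \<otimes> iv (d1 e) (del1 e x) \<otimes> inv (t e))" using relG(3)[OF e x(1)] by simp
  also have "\<dots> = (Ut #> t e) \<otimes>\<^bsub>G Mod Ut\<^esub> (Ut #> iv (d1 e) (del1 e x)) \<otimes>\<^bsub>G Mod Ut\<^esub> inv\<^bsub>G Mod Ut\<^esub> (Ut #> t e)"
    using group_hom.hom_mult[OF piUt] group_hom.hom_inv[OF piUt] te a1 by simp
  also have "\<dots> = tq e \<otimes>\<^bsub>G Mod Ut\<^esub> ivq (d1 e) (GU_del G U d1 del1 iv e C) \<otimes>\<^bsub>G Mod Ut\<^esub> inv\<^bsub>G Mod Ut\<^esub> tq e"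
    unfolding tq_def x(2) gudel1[OF e x(1)] ivq_eq[OF dV(2)[OF e] x1] ..
  finally show "ivq (d0 e) (GU_del G U d0 del0 iv e C) = tq e \<otimes>\<^bsub>G Mod Ut\<^esub> ivq (d1 e) (GU_del G U d1 del1 iv e C) \<otimes>\<^bsub>G Mod Ut\<^esub> inv\<^bsub>G Mod Ut\<^esub> tq e" .
qed

lemma genQ: "closed_generate (G Mod Ut) (quot_top G T Ut)
    ((\<Union>v\<in>V. ivq v ` carrier (GU_vertex G U GV iv v)) \<union> tq ` E) = carrier (G Mod Ut)"
proof -
  define Xg where "Xg = (\<Union>v\<in>V. iv v ` carrier (GV v)) \<union> t ` E"
  have Xc: "Xg \<subseteq> carrier G" unfolding Xg_def using ivc relG(1) by blast
  have "\<And>v. v \<in> V \<Longrightarrow> ivq v ` carrier (GU_vertex G U GV iv v) = (\<lambda>x. Ut #> x) ` iv v ` carrier (GV v)"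
  proof -
    fix v assume v: "v \<in> V"
    have "ivq v ` carrier (GU_vertex G U GV iv v) = (\<lambda>x. ivq v (U #> iv v x)) ` carrier (GV v)"
      unfolding carGU image_image ..
    also have "\<dots> = (\<lambda>x. Ut #> iv v x) ` carrier (GV v)"
      using ivq_eq[OF v] by (rule image_cong[OF refl])
    finally show "ivq v ` carrier (GU_vertex G U GV iv v) = (\<lambda>x. Ut #> x) ` iv v ` carrier (GV v)"
      unfolding image_image .
  qed
  then have "(\<Union>v\<in>V. ivq v ` carrier (GU_vertex G U GV iv v)) = (\<Union>v\<in>V. (\<lambda>x. Ut #> x) ` iv v ` carrier (GV v))"
    by (rule SUP_cong[OF refl])
  moreover have "tq ` E = (\<lambda>x. Ut #> x) ` t ` E" unfolding tq_def image_image ..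
  ultimately have eqX: "(\<Union>v\<in>V. ivq v ` carrier (GU_vertex G U GV iv v)) \<union> tq ` E = (\<lambda>x. Ut #> x) ` Xg"
    unfolding Xg_def image_Un image_UN by simp
  have gi: "generate (G Mod Ut) ((\<lambda>x. Ut #> x) ` Xg) = (\<lambda>x. Ut #> x) ` generate G Xg"
    using group_hom.generate_img[OF piUt Xc] .
  have "carrier G = T closure_of generate G Xg" using gen unfolding closed_generate_def Xg_def by simp
  then have "(\<lambda>x. Ut #> x) ` carrier G \<subseteq> quot_top G T Ut closure_of ((\<lambda>x. Ut #> x) ` generate G Xg)"
    using continuous_map_image_closure_subset[OF quot_map_continuous[OF grp sUt top]] by simp
  moreover have "(\<lambda>x. Ut #> x) ` carrier G = carrier (G Mod Ut)" unfolding carQ RCOSETS_def by auto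
  ultimately have "carrier (G Mod Ut) \<subseteq> closed_generate (G Mod Ut) (quot_top G T Ut) ((\<lambda>x. Ut #> x) ` Xg)"
    unfolding closed_generate_def gi by simp
  moreover have "closed_generate (G Mod Ut) (quot_top G T Ut) ((\<lambda>x. Ut #> x) ` Xg) \<subseteq> carrier (G Mod Ut)"
    unfolding closed_generate_def carQ topspace_quot_top[OF grp sUt top, symmetric]
    by (rule closure_of_subset_topspace)
  ultimately show ?thesis unfolding eqX by (rule antisym[rotated])
qed

lemma alpha_cont:
  assumes v: "v \<in> V"
  shows "continuous_map (TV v) (GU_vertex_top G T U GV iv v) (\<lambda>x. U #> iv v x)"
proof -
  have c1: "continuous_map (TV v) (quot_top G T U) (\<lambda>x. U #> iv v x)"
    using continuous_map_compose[OF ivcont[OF v] quot_map_continuous[OF grp sU top]]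
    by (simp add: o_def)
  show ?thesis unfolding GU_vertex_top_def continuous_map_in_subtopology
    using c1 topV[OF v] by auto
qed

lemma U_in_GU: "v \<in> V \<Longrightarrow> U \<in> carrier (GU_vertex G U GV iv v)"
proof -
  assume v: "v \<in> V"
  have "iv v \<one>\<^bsub>GV v\<^esub> = \<one>" using group_hom.hom_one[OF ivhom[OF v]] .
  moreover have "U #> \<one> = U" using coset_mult_one subgroup.subset[OF sU] by blast
  ultimately have "U = U #> iv v \<one>\<^bsub>GV v\<^esub>" by simp
  moreover have "\<one>\<^bsub>GV v\<^esub> \<in> carrier (GV v)" using group.is_monoid[OF gV[OF v]] monoid.one_closed by blast
  ultimately show ?thesis unfolding carGU by blast
qed

lemma UU: "U <#> U = U"
proof -
  have "U #> \<one> = U" using coset_mult_one subgroup.subset[OF sU] by blast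
  then show ?thesis using normal.rcos_sum[OF Un one_closed one_closed] by simp
qed

lemma univQ: "\<forall>(H :: nat monoid) f s.
        group H \<and> finite (carrier H) \<and> (\<exists>k::nat. card (carrier H) = p ^ k) \<and>
        (\<forall>v\<in>V. f v \<in> cont_hom (GU_vertex G U GV iv v) (GU_vertex_top G T U GV iv v) H (discrete_topology (carrier H))) \<and>
        pi1_relations V E d0 d1 D (GU_edge G U d1 GE del1 iv) (GU_del G U d0 del0 iv) (GU_del G U d1 del1 iv) H f s \<longrightarrow>
        (\<exists>\<phi> \<in> cont_hom (G Mod Ut) (quot_top G T Ut) H (discrete_topology (carrier H)).
           (\<forall>v\<in>V. \<forall>x\<in>carrier (GU_vertex G U GV iv v). \<phi> (ivq v x) = f v x) \<and> (\<forall>e\<in>E. \<phi> (tq e) = s e))"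
proof (intro allI impI)
  fix H :: "nat monoid" and f s
  assume A: "group H \<and> finite (carrier H) \<and> (\<exists>k::nat. card (carrier H) = p ^ k) \<and>
        (\<forall>v\<in>V. f v \<in> cont_hom (GU_vertex G U GV iv v) (GU_vertex_top G T U GV iv v) H (discrete_topology (carrier H))) \<and>
        pi1_relations V E d0 d1 D (GU_edge G U d1 GE del1 iv) (GU_del G U d0 del0 iv) (GU_del G U d1 del1 iv) H f s"
  have gH: "group H" using A by blast
  have fin: "finite (carrier H)" using A by blast
  have pk: "\<exists>k::nat. card (carrier H) = p ^ k" using A by blast
  have fh: "\<And>v. v \<in> V \<Longrightarrow> f v \<in> cont_hom (GU_vertex G U GV iv v) (GU_vertex_top G T U GV iv v) H (discrete_topology (carrier H))"
    using A by blast
  have relH: "pi1_relations V E d0 d1 D (GU_edge G U d1 GE del1 iv) (GU_del G U d0 del0 iv) (GU_del G U d1 del1 iv) H f s"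
    using A by blast
  have fhom: "\<And>v. v \<in> V \<Longrightarrow> f v \<in> hom (GU_vertex G U GV iv v) H" using fh unfolding cont_hom_def by blast
  have fcont: "\<And>v. v \<in> V \<Longrightarrow> continuous_map (GU_vertex_top G T U GV iv v) (discrete_topology (carrier H)) (f v)"
    using fh unfolding cont_hom_def by blast
  define f0 where "f0 v x = f v (U #> iv v x)" for v x
  have f0h: "\<forall>v\<in>V. f0 v \<in> cont_hom (GV v) (TV v) H (discrete_topology (carrier H))"
  proof
    fix v assume v: "v \<in> V"
    have "f0 v \<in> hom (GV v) H"
    proof (rule homI)
      fix x assume x: "x \<in> carrier (GV v)"
      have "U #> iv v x \<in> carrier (GU_vertex G U GV iv v)" unfolding carGU using x by blast
      then show "f0 v x \<in> carrier H" unfolding f0_def using fhom[OF v] unfolding hom_def by blast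
    next
      fix x y assume x: "x \<in> carrier (GV v)" and y: "y \<in> carrier (GV v)"
      have cx: "U #> iv v x \<in> carrier (GU_vertex G U GV iv v)" unfolding carGU using x by blast
      have cy: "U #> iv v y \<in> carrier (GU_vertex G U GV iv v)" unfolding carGU using y by blast
      have "U #> iv v (x \<otimes>\<^bsub>GV v\<^esub> y) = (U #> iv v x) \<otimes>\<^bsub>GU_vertex G U GV iv v\<^esub> (U #> iv v y)"
        unfolding multGU group_hom.hom_mult[OF ivhom[OF v] x y]
        using normal.rcos_sum[OF Un ivc[OF v x] ivc[OF v y]] by simp
      then show "f0 v (x \<otimes>\<^bsub>GV v\<^esub> y) = f0 v x \<otimes>\<^bsub>H\<^esub> f0 v y"
        unfolding f0_def using hom_mult[OF fhom[OF v] cx cy] by simp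
    qed
    moreover have "continuous_map (TV v) (discrete_topology (carrier H)) (f0 v)"
      using continuous_map_compose[OF alpha_cont[OF v] fcont[OF v]] unfolding f0_def o_def .
    ultimately show "f0 v \<in> cont_hom (GV v) (TV v) H (discrete_topology (carrier H))"
      unfolding cont_hom_def by blast
  qed
  have sH: "\<And>e. e \<in> E \<Longrightarrow> s e \<in> carrier H" and sD: "\<And>e. e \<in> D \<Longrightarrow> s e = \<one>\<^bsub>H\<^esub>"
    and fr: "\<And>e C. e \<in> E \<Longrightarrow> C \<in> carrier (GU_edge G U d1 GE del1 iv e) \<Longrightarrow>
      f (d0 e) (GU_del G U d0 del0 iv e C) = s e \<otimes>\<^bsub>H\<^esub> f (d1 e) (GU_del G U d1 del1 iv e C) \<otimes>\<^bsub>H\<^esub> inv\<^bsub>H\<^esub> s e"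
    using relH unfolding pi1_relations_def by blast+
  have rel0: "pi1_relations V E d0 d1 D GE del0 del1 H f0 s"
    unfolding pi1_relations_def
  proof (intro conjI ballI)
    fix e assume "e \<in> E" then show "s e \<in> carrier H" by (rule sH)
  next
    fix e assume "e \<in> D" then show "s e = \<one>\<^bsub>H\<^esub>" by (rule sD)
  next
    fix e x assume e: "e \<in> E" and x: "x \<in> carrier (GE e)"
    have C: "edge_kernel G U d1 GE del1 iv e #>\<^bsub>GE e\<^esub> x \<in> carrier (GU_edge G U d1 GE del1 iv e)"
      unfolding GU_edge_def using rcosetsI'[OF gE[OF e] sK[OF e] x] by (simp add: FactGroup_def)
    show "f0 (d0 e) (del0 e x) = s e \<otimes>\<^bsub>H\<^esub> f0 (d1 e) (del1 e x) \<otimes>\<^bsub>H\<^esub> inv\<^bsub>H\<^esub> s e"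
      unfolding f0_def using fr[OF e C] unfolding gudel0[OF e x] gudel1[OF e x] .
  qed
  have univ: "\<forall>(H :: nat monoid) f s.
        group H \<and> finite (carrier H) \<and> (\<exists>k::nat. card (carrier H) = p ^ k) \<and>
        (\<forall>v\<in>V. f v \<in> cont_hom (GV v) (TV v) H (discrete_topology (carrier H))) \<and>
        pi1_relations V E d0 d1 D GE del0 del1 H f s \<longrightarrow>
        (\<exists>\<phi> \<in> cont_hom G T H (discrete_topology (carrier H)).
           (\<forall>v\<in>V. \<forall>x\<in>carrier (GV v). \<phi> (iv v x) = f v x) \<and> (\<forall>e\<in>E. \<phi> (t e) = s e))"
    using pi1 unfolding is_pi1_def by blast
  have "\<exists>\<phi> \<in> cont_hom G T H (discrete_topology (carrier H)).
           (\<forall>v\<in>V. \<forall>x\<in>carrier (GV v). \<phi> (iv v x) = f0 v x) \<and> (\<forall>e\<in>E. \<phi> (t e) = s e)"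
    using spec[OF spec[OF spec[OF univ, of H], of f0], of s] gH fin pk f0h rel0 by blast
  then obtain \<phi> where phi: "\<phi> \<in> cont_hom G T H (discrete_topology (carrier H))"
    and phiv: "\<And>v x. v \<in> V \<Longrightarrow> x \<in> carrier (GV v) \<Longrightarrow> \<phi> (iv v x) = f0 v x"
    and phit: "\<And>e. e \<in> E \<Longrightarrow> \<phi> (t e) = s e" by blast
  have phih: "group_hom G H \<phi>" using phi grp gH unfolding cont_hom_def group_hom_def group_hom_axioms_def by blast
  have phic: "continuous_map T (discrete_topology (carrier H)) \<phi>" using phi unfolding cont_hom_def by blast
  interpret Hg: group H by (rule gH)
  define Kp where "Kp = kernel G H \<phi>"
  have sKp: "subgroup Kp G" unfolding Kp_def using group_hom.subgroup_kernel[OF phih] .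
  have "closedin T {x \<in> topspace T. \<phi> x \<in> {\<one>\<^bsub>H\<^esub>}}"
    using closedin_continuous_map_preimage[OF phic, of "{\<one>\<^bsub>H\<^esub>}"] by simp
  then have clKp: "closedin T Kp" unfolding Kp_def kernel_def top by simp
  have fvU: "\<And>v. v \<in> V \<Longrightarrow> f v U = \<one>\<^bsub>H\<^esub>"
  proof -
    fix v assume v: "v \<in> V"
    have UC: "U \<in> carrier (GU_vertex G U GV iv v)" using U_in_GU[OF v] .
    have "f v U = f v (U \<otimes>\<^bsub>GU_vertex G U GV iv v\<^esub> U)" unfolding multGU UU ..
    also have "\<dots> = f v U \<otimes>\<^bsub>H\<^esub> f v U" using hom_mult[OF fhom[OF v] UC UC] .
    finally have "f v U \<otimes>\<^bsub>H\<^esub> f v U = f v U" by simp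
    moreover have "f v U \<in> carrier H" using fhom[OF v] UC unfolding hom_def by blast
    ultimately show "f v U = \<one>\<^bsub>H\<^esub>" using Hg.r_cancel_one by blast
  qed
  have SK: "S \<subseteq> Kp"
  proof
    fix y assume "y \<in> S"
    then obtain v g x where vgx: "v \<in> V" "g \<in> carrier G" "x \<in> carrier (GV v)"
      "y = inv g \<otimes> iv v x \<otimes> g" "y \<in> U" unfolding S_def by blast
    have a: "iv v x \<in> carrier G" using ivc[OF vgx(1,3)] .
    have "g \<otimes> y \<otimes> inv g = iv v x" unfolding vgx(4) using a vgx(2) by (simp add: m_assoc[symmetric]) (simp add: m_assoc)
    moreover have "g \<otimes> y \<otimes> inv g \<in> U" using iffD1[OF normal_inv_iff Un] vgx(2,5) by blast
    ultimately have aU: "iv v x \<in> U" by simp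
    have "U #> iv v x = U" using rcos_eq_self[OF grp sU a] aU by simp
    then have p1: "\<phi> (iv v x) = \<one>\<^bsub>H\<^esub>" using phiv[OF vgx(1,3)] fvU[OF vgx(1)] unfolding f0_def by simp
    have "\<phi> y = inv\<^bsub>H\<^esub> \<phi> g \<otimes>\<^bsub>H\<^esub> \<phi> (iv v x) \<otimes>\<^bsub>H\<^esub> \<phi> g"
      unfolding vgx(4) using group_hom.hom_mult[OF phih] group_hom.hom_inv[OF phih] a vgx(2) by simp
    also have "\<dots> = \<one>\<^bsub>H\<^esub>" unfolding p1 using group_hom.hom_closed[OF phih vgx(2)] by simp
    finally have "\<phi> y = \<one>\<^bsub>H\<^esub>" .
    moreover have "y \<in> carrier G" using vgx(4) a vgx(2) by simp
    ultimately show "y \<in> Kp" unfolding Kp_def kernel_def by simp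
  qed
  have UtK: "Ut \<subseteq> Kp" unfolding Ut_eq
    using closure_of_minimal[OF generate_subgroup_incl[OF SK sKp] clKp] .
  define \<psi> where "\<psi> C = \<phi> (SOME g. g \<in> C)" for C
  have psi_eq: "\<And>g. g \<in> carrier G \<Longrightarrow> \<psi> (Ut #> g) = \<phi> g"
  proof -
    fix g assume g: "g \<in> carrier G"
    have gin: "g \<in> Ut #> g" using rcos_self[OF g sUt] .
    define g' where "g' = (SOME g'. g' \<in> Ut #> g)"
    have g': "g' \<in> Ut #> g" unfolding g'_def using gin by (rule someI)
    then obtain u where u: "u \<in> Ut" "g' = u \<otimes> g" unfolding r_coset_def by blast
    have uc: "u \<in> carrier G" using subgroup.mem_carrier[OF sUt u(1)] .
    have "\<phi> u = \<one>\<^bsub>H\<^esub>" using UtK u(1) unfolding Kp_def kernel_def by blast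
    then have "\<phi> g' = \<phi> g" unfolding u(2) using group_hom.hom_mult[OF phih uc g] group_hom.hom_closed[OF phih g] by simp
    then show "\<psi> (Ut #> g) = \<phi> g" unfolding \<psi>_def g'_def[symmetric] .
  qed
  have psih: "\<psi> \<in> hom (G Mod Ut) H"
  proof (rule homI)
    fix C assume "C \<in> carrier (G Mod Ut)"
    then obtain g where g: "g \<in> carrier G" "C = Ut #> g" unfolding carQ RCOSETS_def by blast
    show "\<psi> C \<in> carrier H" unfolding g(2) psi_eq[OF g(1)] using group_hom.hom_closed[OF phih g(1)] .
  next
    fix C1 C2 assume "C1 \<in> carrier (G Mod Ut)" "C2 \<in> carrier (G Mod Ut)"
    then obtain a b where a: "a \<in> carrier G" "C1 = Ut #> a" and b: "b \<in> carrier G" "C2 = Ut #> b"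
      unfolding carQ RCOSETS_def by blast
    have "C1 \<otimes>\<^bsub>G Mod Ut\<^esub> C2 = Ut #> (a \<otimes> b)"
      unfolding multQ a(2) b(2) using normal.rcos_sum[OF Ut_normal a(1) b(1)] .
    then show "\<psi> (C1 \<otimes>\<^bsub>G Mod Ut\<^esub> C2) = \<psi> C1 \<otimes>\<^bsub>H\<^esub> \<psi> C2"
      unfolding a(2) b(2) using psi_eq[OF m_closed[OF a(1) b(1)]] psi_eq[OF a(1)] psi_eq[OF b(1)]
        group_hom.hom_mult[OF phih a(1) b(1)] by simp
  qed
  have "continuous_map T (discrete_topology (carrier H)) (\<psi> \<circ> (\<lambda>x. Ut #> x))"
    using continuous_map_eq[OF phic] psi_eq top by simp
  then have psic: "continuous_map (quot_top G T Ut) (discrete_topology (carrier H)) \<psi>"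
    using continuous_compose_quotient_map[OF quot_map_quotient[OF tg sUt]] by blast
  have psiv: "\<forall>v\<in>V. \<forall>x\<in>carrier (GU_vertex G U GV iv v). \<psi> (ivq v x) = f v x"
  proof (intro ballI)
    fix v C assume v: "v \<in> V" and C: "C \<in> carrier (GU_vertex G U GV iv v)"
    then obtain x where x: "x \<in> carrier (GV v)" "C = U #> iv v x" unfolding carGU by blast
    show "\<psi> (ivq v C) = f v C" unfolding x(2) ivq_eq[OF v x(1)] psi_eq[OF ivc[OF v x(1)]]
      phiv[OF v x(1)] f0_def ..
  qed
  have psit: "\<forall>e\<in>E. \<psi> (tq e) = s e"
    using psi_eq relG(1) phit unfolding tq_def by simp
  show "\<exists>\<phi> \<in> cont_hom (G Mod Ut) (quot_top G T Ut) H (discrete_topology (carrier H)).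
           (\<forall>v\<in>V. \<forall>x\<in>carrier (GU_vertex G U GV iv v). \<phi> (ivq v x) = f v x) \<and> (\<forall>e\<in>E. \<phi> (tq e) = s e)"
    using psih psic psiv psit unfolding cont_hom_def by blast
qed

lemma ivq_ch: "v \<in> V \<Longrightarrow> ivq v \<in> cont_hom (GU_vertex G U GV iv v) (GU_vertex_top G T U GV iv v) (G Mod Ut) (quot_top G T Ut)"
  unfolding cont_hom_def using ivq_hom ivq_cont by blast

lemma main: "Ut \<lhd> G \<and> is_pi1 p V E d0 d1 D
        (GU_vertex G U GV iv) (GU_vertex_top G T U GV iv)
        (GU_edge G U d1 GE del1 iv) (GU_edge_top G U d1 GE TE del1 iv)
        (GU_del G U d0 del0 iv) (GU_del G U d1 del1 iv)
        (G Mod Ut) (quot_top G T Ut) ivq tq"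
  unfolding is_pi1_def
  using Ut_normal quot_pro_p[OF pp Ut_normal Ut_closed] ivq_ch relQ genQ univQ by blast

end

theorem proposition2p14:
  fixes p :: nat
    and V :: "'v set" and E :: "'e set" and d0 d1 :: "'e \<Rightarrow> 'v" and D :: "'e set"
    and GV :: "'v \<Rightarrow> ('a, 'm) monoid_scheme" and TV :: "'v \<Rightarrow> 'a topology"
    and GE :: "'e \<Rightarrow> ('b, 'n) monoid_scheme" and TE :: "'e \<Rightarrow> 'b topology"
    and del0 del1 :: "'e \<Rightarrow> 'b \<Rightarrow> 'a"
    and G :: "('g, 'k) monoid_scheme" and T :: "'g topology"
    and iv :: "'v \<Rightarrow> 'a \<Rightarrow> 'g" and t :: "'e \<Rightarrow> 'g"
    and U :: "'g set"
  assumes "Factorial_Ring.prime p"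
    and "graph_of_pro_p_groups p V E d0 d1 GV TV GE TE del0 del1"
    and "maximal_subtree V E d0 d1 D"
    and "is_pi1 p V E d0 d1 D GV TV GE TE del0 del1 G T iv t"
    and proper: "\<forall>v\<in>V. inj_on (iv v) (carrier (GV v))"
    and "U \<lhd> G" and "closedin T U"
  shows "U_tilde G T V GV iv U \<lhd> G \<and>
    (\<exists>iv' t'. is_pi1 p V E d0 d1 D
        (GU_vertex G U GV iv) (GU_vertex_top G T U GV iv)
        (GU_edge G U d1 GE del1 iv) (GU_edge_top G U d1 GE TE del1 iv)
        (GU_del G U d0 del0 iv) (GU_del G U d1 del1 iv)
        (G Mod (U_tilde G T V GV iv U)) (quot_top G T (U_tilde G T V GV iv U)) iv' t')"
proof -
  interpret P: P214 p V E d0 d1 D GV TV GE TE del0 del1 G T iv t U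
    by (rule P214.intro[OF assms(2,4,6,7)])
  show ?thesis unfolding P.Ut_def[symmetric] using P.main by blast
qed

end
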